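(* There exists a parallelism of lines in the projective geometry $\mathrm{PG}(5,3)$; that is, the set of all lines of $\mathrm{PG}(5,3)$ can be partitioned into $121$ pairwise disjoint spreads, where each spread is a set of $91$ lines such that every point of $\mathrm{PG}(5,3)$ lies on exactly one line of the spread.
   Context: $\mathrm{PG}(5,3)$ is the projective geometry whose points are the $364$ one-dimensional subspaces of $\mathbb{F}_3^6$ and whose lines are the two-dimensional subspaces of $\mathbb{F}_3^6$ (each line contains $4$ points). A spread (1-spread) of $\mathrm{PG}(5,3)$ is a set of pairwise disjoint lines covering all points; two spreads are disjoint if they share no line, and a parallelism is a partition of the set of all lines into spreads. *)

theory Defs
  imports "HOL-Analysis.Analysis"
begin

definition pg_points :: "('a::field ^ 6) set set" where
  "pg_points = {P. vec.subspace P \<and> vec.dim P = 1}"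

definition pg_lines :: "('a::field ^ 6) set set" where
  "pg_lines = {L. vec.subspace L \<and> vec.dim L = 2}"

definition is_spread :: "('a::field ^ 6) set set \<Rightarrow> bool" where
  "is_spread S \<longleftrightarrow> S \<subseteq> pg_lines \<and> (\<forall>P\<in>pg_points. \<exists>!L. L \<in> S \<and> P \<subseteq> L)"

definition is_parallelism :: "('a::field ^ 6) set set set \<Rightarrow> bool" where
  "is_parallelism \<P> \<longleftrightarrow> (\<forall>S\<in>\<P>. is_spread S) \<and>
     (\<forall>L\<in>pg_lines. \<exists>!S. S \<in> \<P> \<and> L \<in> S)"

end

theory Submission
  imports Defs "HOL-Computational_Algebra.Primes"
begin

context
  assumes card3: "CARD('a::field) = 3"
begin

lemma finA: "finite (UNIV::'a set)"
  using card3 card.infinite by fastforce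

lemma F3_aux: "\<exists>x::'a. x \<noteq> 0 \<and> x \<noteq> 1 \<and> (UNIV::'a set) = {0,1,x}"
proof -
  have "\<not> (UNIV::'a set) \<subseteq> {0,1}"
  proof
    assume "(UNIV::'a set) \<subseteq> {0,1}"
    then have "card (UNIV::'a set) \<le> card {0::'a,1}" by (rule card_mono[rotated]) simp
    also have "\<dots> \<le> 2" by (rule card_insert_le_m1) simp_all
    finally show False using card3 by simp
  qed
  then obtain x::'a where x: "x \<noteq> 0" "x \<noteq> 1" by blast
  have c: "card {0,1,x} = 3" using x by simp
  have "{0,1,x} = (UNIV::'a set)"
    by (rule card_subset_eq[OF finA]) (simp_all add: c card3)
  then show ?thesis using x by blast
qed

lemma F3: "(UNIV::'a set) = {0, 1, -1}" "(1::'a) + 1 = -1" "(1::'a) \<noteq> -1"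
proof -
  obtain x::'a where x: "x \<noteq> 0" "x \<noteq> 1" "(UNIV::'a set) = {0,1,x}" using F3_aux by blast
  have "x + 1 \<in> {0,1,x}" using x(3) by blast
  moreover have "x + 1 \<noteq> 1" using x(1) by simp
  moreover have "x + 1 \<noteq> x" by simp
  ultimately have "x + 1 = 0" by blast
  then have xm: "x = -1" by (simp add: eq_neg_iff_add_eq_0)
  show "(UNIV::'a set) = {0, 1, -1}" using x(3) xm by simp
  show m1: "(1::'a) \<noteq> -1" using x(2) xm by metis
  have "(1::'a) + 1 \<in> {0,1,x}" using x(3) by blast
  moreover have "(1::'a) + 1 \<noteq> 1" by (metis add_cancel_right_right zero_neq_one)
  moreover have "(1::'a) + 1 \<noteq> 0" using m1 by (metis add_eq_0_iff)
  ultimately show "(1::'a) + 1 = -1" using xm by simp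
qed

lemma three_zero: "(3::'a) = 0"
proof -
  have "(3::'a) = 1 + 1 + 1" by simp
  also have "\<dots> = 0" using F3(2) by simp
  finally show ?thesis .
qed

lemma two_eq: "(2::'a) = -1"
  using F3(2) by (simp add: one_add_one)

lemma of_nat_mod3: "(of_nat (n mod 3) :: 'a) = of_nat n"
proof -
  have e: "n = 3 * (n div 3) + n mod 3" by simp
  have "(of_nat n :: 'a) = of_nat (3 * (n div 3) + n mod 3)" by (subst e) (rule refl)
  also have "\<dots> = 3 * of_nat (n div 3) + of_nat (n mod 3)" by (simp only: of_nat_add of_nat_mult of_nat_numeral)
  also have "\<dots> = of_nat (n mod 3)" by (simp add: three_zero)
  finally show ?thesis by simp
qed

lemma of_nat2: "(of_nat 2 :: 'a) = -1"
  using two_eq by simp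

lemma of_nat_inj3: "a < 3 \<Longrightarrow> b < 3 \<Longrightarrow> (of_nat a :: 'a) = of_nat b \<longleftrightarrow> a = b"
proof -
  assume a: "a < 3" and b: "b < 3"
  have d: "(0::'a) \<noteq> 1" "(0::'a) \<noteq> -1" "(1::'a) \<noteq> -1" "(1::'a) \<noteq> 0" "(-1::'a) \<noteq> 0" "(-1::'a) \<noteq> 1"
    using F3(3) by (auto dest: sym)
  have ca: "a = 0 \<or> a = 1 \<or> a = 2" using a by auto
  have cb: "b = 0 \<or> b = 1 \<or> b = 2" using b by auto
  show ?thesis
  proof
    assume "(of_nat a :: 'a) = of_nat b" 
    then show "a = b" using ca cb d of_nat2 by (elim disjE) simp_all
  qed simp
qed

lemma neg_self_a: "(-a::'a) = a \<Longrightarrow> a = 0"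
proof -
  assume h: "-a = a"
  have "a \<in> {0,1,-1}" using F3(1) by blast
  then consider "a = 0" | "a = 1" | "a = -1" by blast
  then show "a = 0"
  proof cases
    case 2 then have "(-1::'a) = 1" using h by simp
    then show ?thesis using F3(3) by simp
  next
    case 3 then have "(-1::'a) = 1" using h by simp
    then show ?thesis using F3(3) by simp
  qed
qed

lemma neg_self: "(-x::'a^'n) = x \<Longrightarrow> x = 0"
proof -
  assume h: "-x = x"
  have "\<forall>i. x$i = 0"
  proof
    fix i
    have "-(x$i) = x$i" using h by (metis vector_uminus_component)
    then show "x$i = 0" by (rule neg_self_a)
  qed
  then show ?thesis by (simp add: vec_eq_iff)
qed

end

lemma exhaust_6:
  fixes x :: 6
  shows "x = 0 \<or> x = 1 \<or> x = 2 \<or> x = 3 \<or> x = 4 \<or> x = 5"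
proof (induct x)
  case (of_int z)
  then have "z = 0 \<or> z = 1 \<or> z = 2 \<or> z = 3 \<or> z = 4 \<or> z = 5" by fastforce
  then show ?case by auto
qed

definition ix :: "6 \<Rightarrow> nat" where
  "ix i = (if i = 0 then 0 else if i = 1 then 1 else if i = 2 then 2 else if i = 3 then 3
           else if i = 4 then 4 else 5)"

lemma ix_simps[simp]: "ix 0 = 0" "ix 1 = 1" "ix 2 = 2" "ix 3 = 3" "ix 4 = 4" "ix 5 = 5"
  by (simp_all add: ix_def)

lemma ix_surj: "k < 6 \<Longrightarrow> \<exists>i. ix i = k"
proof -
  assume "k < 6"
  then have "k = 0 \<or> k = 1 \<or> k = 2 \<or> k = 3 \<or> k = 4 \<or> k = 5" by auto
  then show ?thesis by (elim disjE) (metis ix_simps)+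
qed

definition V :: "nat list \<Rightarrow> 'a::field^6" where
  "V xs = (\<chi> i. of_nat (xs ! ix i))"

definition valid :: "nat list \<Rightarrow> bool" where
  "valid xs \<longleftrightarrow> length xs = 6 \<and> (\<forall>x\<in>set xs. x < 3)"

definition addl :: "nat list \<Rightarrow> nat list \<Rightarrow> nat list" where
  "addl xs ys = map (\<lambda>(a,b). (a + b) mod 3) (zip xs ys)"

definition negl :: "nat list \<Rightarrow> nat list" where
  "negl xs = map (\<lambda>a. (2 * a) mod 3) xs"

definition gc :: "nat list \<Rightarrow> nat list" where
  "gc xs = [(2 * (xs!4)) mod 3, xs!0, xs!1, xs!2, (xs!3 + xs!4) mod 3, xs!5]"

lemma valid_nth: "valid xs \<Longrightarrow> k < 6 \<Longrightarrow> xs ! k < 3"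
  unfolding valid_def by auto

lemma valid_addl: "valid xs \<Longrightarrow> valid ys \<Longrightarrow> valid (addl xs ys)"
  unfolding valid_def addl_def by (auto simp: set_zip)

lemma valid_negl: "valid xs \<Longrightarrow> valid (negl xs)"
  unfolding valid_def negl_def by auto

lemma valid_gc: "valid xs \<Longrightarrow> valid (gc xs)"
  using valid_nth[of xs] unfolding gc_def by (simp add: valid_def)

definition gv :: "'a::field^6 \<Rightarrow> 'a^6" where
  "gv v = (\<chi> i. if i = 0 then - (v$4) else if i = 1 then v$0 else if i = 2 then v$1
            else if i = 3 then v$2 else if i = 4 then v$3 + v$4 else v$5)"

lemma gv_add: "gv (x + y) = gv x + gv y"
  unfolding gv_def by (simp add: vec_eq_iff)

lemma gv_neg: "gv (- x) = - gv x"
  unfolding gv_def by (simp add: vec_eq_iff)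

lemma gv_smult: "gv (c *s x) = c *s gv x"
  unfolding gv_def by (simp add: vec_eq_iff algebra_simps)

lemma gvp_add: "(gv ^^ n) (x + y) = (gv ^^ n) x + (gv ^^ n) y"
  by (induction n) (simp_all add: gv_add)

lemma gvp_neg: "(gv ^^ n) (- x) = - (gv ^^ n) x"
  by (induction n) (simp_all add: gv_neg)

lemma gvp_diff: "(gv ^^ n) (x - y) = (gv ^^ n) x - (gv ^^ n) y"
  using gvp_add[of n x "-y"] gvp_neg[of n y] by simp

lemma gvp_smult: "(gv ^^ n) (c *s x) = c *s (gv ^^ n) x"
  by (induction n) (simp_all add: gv_smult)

lemma gvp_zero: "(gv ^^ n) 0 = 0"
  using gvp_smult[of n 0 0] by simp

lemma gv_comp5: "(gv v) $ 5 = v $ 5"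
  unfolding gv_def by simp

lemma gvp_comp5: "((gv ^^ n) v) $ 5 = v $ 5"
  by (induction n) (simp_all add: gv_comp5)

lemma V_comp: "(V xs :: 'a::field^6) $ i = of_nat (xs ! ix i)"
  unfolding V_def by simp

context
  assumes card3: "CARD('a::field) = 3"
begin

lemma V_inj: "valid xs \<Longrightarrow> valid ys \<Longrightarrow> (V xs :: 'a^6) = V ys \<Longrightarrow> xs = ys"
proof -
  assume vx: "valid xs" and vy: "valid ys" and e: "(V xs :: 'a^6) = V ys"
  show "xs = ys"
  proof (rule nth_equalityI)
    show "length xs = length ys" using vx vy by (simp add: valid_def)
    fix k assume "k < length xs"
    then have k: "k < 6" using vx by (simp add: valid_def)
    then obtain i where i: "ix i = k" using ix_surj by blast
    have "(V xs :: 'a^6) $ i = V ys $ i" using e by simp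
    then have "(of_nat (xs ! k) :: 'a) = of_nat (ys ! k)" using i by (simp add: V_comp)
    then show "xs ! k = ys ! k"
      using of_nat_inj3[OF card3] valid_nth[OF vx k] valid_nth[OF vy k] by blast
  qed
qed

definition enc :: "'a \<Rightarrow> nat" where
  "enc x = (if x = 0 then 0 else if x = 1 then 1 else 2)"

lemma of_nat_enc: "(of_nat (enc x) :: 'a) = x"
proof -
  have "x \<in> {0,1,-1}" using F3(1)[OF card3] by blast
  then show ?thesis unfolding enc_def using of_nat2[OF card3] by auto
qed

lemma V_surj: "\<exists>xs. valid xs \<and> (v::'a^6) = V xs"
proof -
  define xs where "xs = [enc (v$0), enc (v$1), enc (v$2), enc (v$3), enc (v$4), enc (v$5)]"
  have "valid xs" unfolding xs_def valid_def enc_def by simp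
  moreover have "v = V xs"
  proof (subst vec_eq_iff, rule allI)
    fix i :: 6
    show "v $ i = V xs $ i"
      unfolding V_comp using exhaust_6[of i]
      by (elim disjE) (simp_all add: xs_def of_nat_enc)
  qed
  ultimately show ?thesis by blast
qed

lemma V_add: "valid xs \<Longrightarrow> valid ys \<Longrightarrow> (V xs :: 'a^6) + V ys = V (addl xs ys)"
proof -
  assume vx: "valid xs" and vy: "valid ys"
  show ?thesis
  proof (subst vec_eq_iff, rule allI)
    fix i :: 6
    have k: "ix i < 6" unfolding ix_def by simp
    have l: "length xs = 6" "length ys = 6" using vx vy by (simp_all add: valid_def)
    show "(V xs + V ys :: 'a^6) $ i = V (addl xs ys) $ i"
      using k l by (simp add: V_comp addl_def of_nat_mod3[OF card3])
  qed
qed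

lemma V_neg: "valid xs \<Longrightarrow> - (V xs :: 'a^6) = V (negl xs)"
proof -
  assume vx: "valid xs"
  show ?thesis
  proof (subst vec_eq_iff, rule allI)
    fix i :: 6
    have k: "ix i < 6" unfolding ix_def by simp
    have l: "length xs = 6" using vx by (simp add: valid_def)
    have "(- V xs :: 'a^6) $ i = - of_nat (xs ! ix i)" by (simp add: V_comp)
    also have "\<dots> = of_nat 2 * of_nat (xs ! ix i)" by (simp add: two_eq[OF card3])
    also have "\<dots> = (of_nat (2 * (xs ! ix i) mod 3) :: 'a)"
      by (simp only: of_nat_mod3[OF card3] of_nat_mult)
    also have "\<dots> = V (negl xs) $ i" using k l by (simp add: V_comp negl_def)
    finally show "(- V xs :: 'a^6) $ i = V (negl xs) $ i" .
  qed
qed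

lemma gv_V: "valid xs \<Longrightarrow> gv (V xs :: 'a^6) = V (gc xs)"
proof -
  assume vx: "valid xs"
  have m: "(of_nat (2 * (xs ! 4) mod 3) :: 'a) = - of_nat (xs ! 4)"
    by (simp only: of_nat_mod3[OF card3] of_nat_mult of_nat2[OF card3]) simp
  have m2: "(of_nat ((xs ! 3 + xs ! 4) mod 3) :: 'a) = of_nat (xs ! 3) + of_nat (xs ! 4)"
    by (simp only: of_nat_mod3[OF card3] of_nat_add)
  show ?thesis
  proof (subst vec_eq_iff, rule allI)
    fix i :: 6
    show "gv (V xs :: 'a^6) $ i = V (gc xs) $ i"
      using exhaust_6[of i]
      by (elim disjE) (simp_all add: gv_def V_comp gc_def m m2)
  qed
qed

end

primrec PW :: "nat \<Rightarrow> nat list" where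
  "PW 0 = [1,0,0,0,0,0]" | "PW (Suc n) = gc (PW n)"

lemma PW_num: "PW (numeral k) = gc (PW (pred_numeral k))"
  by (simp add: numeral_eq_Suc)

lemma valid_PW: "valid (PW n)"
proof (induction n)
  case 0 show ?case by (simp add: valid_def)
next
  case (Suc n) then show ?case by (simp add: valid_gc)
qed

lemma PW_1: "PW 1 = [0,1,0,0,0,0]" by (simp add: gc_def)
lemma PW_2: "PW 2 = [0,0,1,0,0,0]" by (subst PW_num, simp add: PW_1 gc_def)
lemma PW_3: "PW 3 = [0,0,0,1,0,0]" by (subst PW_num, simp add: PW_2 gc_def)
lemma PW_4: "PW 4 = [0,0,0,0,1,0]" by (subst PW_num, simp add: PW_3 gc_def)
lemma PW_5: "PW 5 = [2,0,0,0,1,0]" by (subst PW_num, simp add: PW_4 gc_def)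
lemma PW_6: "PW 6 = [2,2,0,0,1,0]" by (subst PW_num, simp add: PW_5 gc_def)
lemma PW_7: "PW 7 = [2,2,2,0,1,0]" by (subst PW_num, simp add: PW_6 gc_def)
lemma PW_8: "PW 8 = [2,2,2,2,1,0]" by (subst PW_num, simp add: PW_7 gc_def)
lemma PW_9: "PW 9 = [2,2,2,2,0,0]" by (subst PW_num, simp add: PW_8 gc_def)
lemma PW_10: "PW 10 = [0,2,2,2,2,0]" by (subst PW_num, simp add: PW_9 gc_def)
lemma PW_11: "PW 11 = [1,0,2,2,1,0]" by (subst PW_num, simp add: PW_10 gc_def)
lemma PW_12: "PW 12 = [2,1,0,2,0,0]" by (subst PW_num, simp add: PW_11 gc_def)
lemma PW_13: "PW 13 = [0,2,1,0,2,0]" by (subst PW_num, simp add: PW_12 gc_def)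
lemma PW_14: "PW 14 = [1,0,2,1,2,0]" by (subst PW_num, simp add: PW_13 gc_def)
lemma PW_15: "PW 15 = [1,1,0,2,0,0]" by (subst PW_num, simp add: PW_14 gc_def)
lemma PW_16: "PW 16 = [0,1,1,0,2,0]" by (subst PW_num, simp add: PW_15 gc_def)
lemma PW_17: "PW 17 = [1,0,1,1,2,0]" by (subst PW_num, simp add: PW_16 gc_def)
lemma PW_18: "PW 18 = [1,1,0,1,0,0]" by (subst PW_num, simp add: PW_17 gc_def)
lemma PW_19: "PW 19 = [0,1,1,0,1,0]" by (subst PW_num, simp add: PW_18 gc_def)
lemma PW_20: "PW 20 = [2,0,1,1,1,0]" by (subst PW_num, simp add: PW_19 gc_def)
lemma PW_21: "PW 21 = [2,2,0,1,2,0]" by (subst PW_num, simp add: PW_20 gc_def)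
lemma PW_22: "PW 22 = [1,2,2,0,0,0]" by (subst PW_num, simp add: PW_21 gc_def)
lemma PW_23: "PW 23 = [0,1,2,2,0,0]" by (subst PW_num, simp add: PW_22 gc_def)
lemma PW_24: "PW 24 = [0,0,1,2,2,0]" by (subst PW_num, simp add: PW_23 gc_def)
lemma PW_25: "PW 25 = [1,0,0,1,1,0]" by (subst PW_num, simp add: PW_24 gc_def)
lemma PW_26: "PW 26 = [2,1,0,0,2,0]" by (subst PW_num, simp add: PW_25 gc_def)
lemma PW_27: "PW 27 = [1,2,1,0,2,0]" by (subst PW_num, simp add: PW_26 gc_def)
lemma PW_28: "PW 28 = [1,1,2,1,2,0]" by (subst PW_num, simp add: PW_27 gc_def)
lemma PW_29: "PW 29 = [1,1,1,2,0,0]" by (subst PW_num, simp add: PW_28 gc_def)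
lemma PW_30: "PW 30 = [0,1,1,1,2,0]" by (subst PW_num, simp add: PW_29 gc_def)
lemma PW_31: "PW 31 = [1,0,1,1,0,0]" by (subst PW_num, simp add: PW_30 gc_def)
lemma PW_32: "PW 32 = [0,1,0,1,1,0]" by (subst PW_num, simp add: PW_31 gc_def)
lemma PW_33: "PW 33 = [2,0,1,0,2,0]" by (subst PW_num, simp add: PW_32 gc_def)
lemma PW_34: "PW 34 = [1,2,0,1,2,0]" by (subst PW_num, simp add: PW_33 gc_def)
lemma PW_35: "PW 35 = [1,1,2,0,0,0]" by (subst PW_num, simp add: PW_34 gc_def)
lemma PW_36: "PW 36 = [0,1,1,2,0,0]" by (subst PW_num, simp add: PW_35 gc_def)
lemma PW_37: "PW 37 = [0,0,1,1,2,0]" by (subst PW_num, simp add: PW_36 gc_def)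
lemma PW_38: "PW 38 = [1,0,0,1,0,0]" by (subst PW_num, simp add: PW_37 gc_def)
lemma PW_39: "PW 39 = [0,1,0,0,1,0]" by (subst PW_num, simp add: PW_38 gc_def)
lemma PW_40: "PW 40 = [2,0,1,0,1,0]" by (subst PW_num, simp add: PW_39 gc_def)
lemma PW_41: "PW 41 = [2,2,0,1,1,0]" by (subst PW_num, simp add: PW_40 gc_def)
lemma PW_42: "PW 42 = [2,2,2,0,2,0]" by (subst PW_num, simp add: PW_41 gc_def)
lemma PW_43: "PW 43 = [1,2,2,2,2,0]" by (subst PW_num, simp add: PW_42 gc_def)
lemma PW_44: "PW 44 = [1,1,2,2,1,0]" by (subst PW_num, simp add: PW_43 gc_def)
lemma PW_45: "PW 45 = [2,1,1,2,0,0]" by (subst PW_num, simp add: PW_44 gc_def)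
lemma PW_46: "PW 46 = [0,2,1,1,2,0]" by (subst PW_num, simp add: PW_45 gc_def)
lemma PW_47: "PW 47 = [1,0,2,1,0,0]" by (subst PW_num, simp add: PW_46 gc_def)
lemma PW_48: "PW 48 = [0,1,0,2,1,0]" by (subst PW_num, simp add: PW_47 gc_def)
lemma PW_49: "PW 49 = [2,0,1,0,0,0]" by (subst PW_num, simp add: PW_48 gc_def)
lemma PW_50: "PW 50 = [0,2,0,1,0,0]" by (subst PW_num, simp add: PW_49 gc_def)
lemma PW_51: "PW 51 = [0,0,2,0,1,0]" by (subst PW_num, simp add: PW_50 gc_def)
lemma PW_52: "PW 52 = [2,0,0,2,1,0]" by (subst PW_num, simp add: PW_51 gc_def)
lemma PW_53: "PW 53 = [2,2,0,0,0,0]" by (subst PW_num, simp add: PW_52 gc_def)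
lemma PW_54: "PW 54 = [0,2,2,0,0,0]" by (subst PW_num, simp add: PW_53 gc_def)
lemma PW_55: "PW 55 = [0,0,2,2,0,0]" by (subst PW_num, simp add: PW_54 gc_def)
lemma PW_56: "PW 56 = [0,0,0,2,2,0]" by (subst PW_num, simp add: PW_55 gc_def)
lemma PW_57: "PW 57 = [1,0,0,0,1,0]" by (subst PW_num, simp add: PW_56 gc_def)
lemma PW_58: "PW 58 = [2,1,0,0,1,0]" by (subst PW_num, simp add: PW_57 gc_def)
lemma PW_59: "PW 59 = [2,2,1,0,1,0]" by (subst PW_num, simp add: PW_58 gc_def)
lemma PW_60: "PW 60 = [2,2,2,1,1,0]" by (subst PW_num, simp add: PW_59 gc_def)
lemma PW_61: "PW 61 = [2,2,2,2,2,0]" by (subst PW_num, simp add: PW_60 gc_def)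
lemma PW_62: "PW 62 = [1,2,2,2,1,0]" by (subst PW_num, simp add: PW_61 gc_def)
lemma PW_63: "PW 63 = [2,1,2,2,0,0]" by (subst PW_num, simp add: PW_62 gc_def)
lemma PW_64: "PW 64 = [0,2,1,2,2,0]" by (subst PW_num, simp add: PW_63 gc_def)
lemma PW_65: "PW 65 = [1,0,2,1,1,0]" by (subst PW_num, simp add: PW_64 gc_def)
lemma PW_66: "PW 66 = [2,1,0,2,2,0]" by (subst PW_num, simp add: PW_65 gc_def)
lemma PW_67: "PW 67 = [1,2,1,0,1,0]" by (subst PW_num, simp add: PW_66 gc_def)
lemma PW_68: "PW 68 = [2,1,2,1,1,0]" by (subst PW_num, simp add: PW_67 gc_def)
lemma PW_69: "PW 69 = [2,2,1,2,2,0]" by (subst PW_num, simp add: PW_68 gc_def)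
lemma PW_70: "PW 70 = [1,2,2,1,1,0]" by (subst PW_num, simp add: PW_69 gc_def)
lemma PW_71: "PW 71 = [2,1,2,2,2,0]" by (subst PW_num, simp add: PW_70 gc_def)
lemma PW_72: "PW 72 = [1,2,1,2,1,0]" by (subst PW_num, simp add: PW_71 gc_def)
lemma PW_73: "PW 73 = [2,1,2,1,0,0]" by (subst PW_num, simp add: PW_72 gc_def)
lemma PW_74: "PW 74 = [0,2,1,2,1,0]" by (subst PW_num, simp add: PW_73 gc_def)
lemma PW_75: "PW 75 = [2,0,2,1,0,0]" by (subst PW_num, simp add: PW_74 gc_def)
lemma PW_76: "PW 76 = [0,2,0,2,1,0]" by (subst PW_num, simp add: PW_75 gc_def)
lemma PW_77: "PW 77 = [2,0,2,0,0,0]" by (subst PW_num, simp add: PW_76 gc_def)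
lemma PW_78: "PW 78 = [0,2,0,2,0,0]" by (subst PW_num, simp add: PW_77 gc_def)
lemma PW_79: "PW 79 = [0,0,2,0,2,0]" by (subst PW_num, simp add: PW_78 gc_def)
lemma PW_80: "PW 80 = [1,0,0,2,2,0]" by (subst PW_num, simp add: PW_79 gc_def)
lemma PW_81: "PW 81 = [1,1,0,0,1,0]" by (subst PW_num, simp add: PW_80 gc_def)
lemma PW_82: "PW 82 = [2,1,1,0,1,0]" by (subst PW_num, simp add: PW_81 gc_def)
lemma PW_83: "PW 83 = [2,2,1,1,1,0]" by (subst PW_num, simp add: PW_82 gc_def)
lemma PW_84: "PW 84 = [2,2,2,1,2,0]" by (subst PW_num, simp add: PW_83 gc_def)
lemma PW_85: "PW 85 = [1,2,2,2,0,0]" by (subst PW_num, simp add: PW_84 gc_def)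
lemma PW_86: "PW 86 = [0,1,2,2,2,0]" by (subst PW_num, simp add: PW_85 gc_def)
lemma PW_87: "PW 87 = [1,0,1,2,1,0]" by (subst PW_num, simp add: PW_86 gc_def)
lemma PW_88: "PW 88 = [2,1,0,1,0,0]" by (subst PW_num, simp add: PW_87 gc_def)
lemma PW_89: "PW 89 = [0,2,1,0,1,0]" by (subst PW_num, simp add: PW_88 gc_def)
lemma PW_90: "PW 90 = [2,0,2,1,1,0]" by (subst PW_num, simp add: PW_89 gc_def)
lemma PW_91: "PW 91 = [2,2,0,2,2,0]" by (subst PW_num, simp add: PW_90 gc_def)
lemma PW_92: "PW 92 = [1,2,2,0,1,0]" by (subst PW_num, simp add: PW_91 gc_def)
lemma PW_93: "PW 93 = [2,1,2,2,1,0]" by (subst PW_num, simp add: PW_92 gc_def)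
lemma PW_94: "PW 94 = [2,2,1,2,0,0]" by (subst PW_num, simp add: PW_93 gc_def)
lemma PW_95: "PW 95 = [0,2,2,1,2,0]" by (subst PW_num, simp add: PW_94 gc_def)
lemma PW_96: "PW 96 = [1,0,2,2,0,0]" by (subst PW_num, simp add: PW_95 gc_def)
lemma PW_97: "PW 97 = [0,1,0,2,2,0]" by (subst PW_num, simp add: PW_96 gc_def)
lemma PW_98: "PW 98 = [1,0,1,0,1,0]" by (subst PW_num, simp add: PW_97 gc_def)
lemma PW_99: "PW 99 = [2,1,0,1,1,0]" by (subst PW_num, simp add: PW_98 gc_def)
lemma PW_100: "PW 100 = [2,2,1,0,2,0]" by (subst PW_num, simp add: PW_99 gc_def)
lemma PW_101: "PW 101 = [1,2,2,1,2,0]" by (subst PW_num, simp add: PW_100 gc_def)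
lemma PW_102: "PW 102 = [1,1,2,2,0,0]" by (subst PW_num, simp add: PW_101 gc_def)
lemma PW_103: "PW 103 = [0,1,1,2,2,0]" by (subst PW_num, simp add: PW_102 gc_def)
lemma PW_104: "PW 104 = [1,0,1,1,1,0]" by (subst PW_num, simp add: PW_103 gc_def)
lemma PW_105: "PW 105 = [2,1,0,1,2,0]" by (subst PW_num, simp add: PW_104 gc_def)
lemma PW_106: "PW 106 = [1,2,1,0,0,0]" by (subst PW_num, simp add: PW_105 gc_def)
lemma PW_107: "PW 107 = [0,1,2,1,0,0]" by (subst PW_num, simp add: PW_106 gc_def)
lemma PW_108: "PW 108 = [0,0,1,2,1,0]" by (subst PW_num, simp add: PW_107 gc_def)
lemma PW_109: "PW 109 = [2,0,0,1,0,0]" by (subst PW_num, simp add: PW_108 gc_def)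
lemma PW_110: "PW 110 = [0,2,0,0,1,0]" by (subst PW_num, simp add: PW_109 gc_def)
lemma PW_111: "PW 111 = [2,0,2,0,1,0]" by (subst PW_num, simp add: PW_110 gc_def)
lemma PW_112: "PW 112 = [2,2,0,2,1,0]" by (subst PW_num, simp add: PW_111 gc_def)
lemma PW_113: "PW 113 = [2,2,2,0,0,0]" by (subst PW_num, simp add: PW_112 gc_def)
lemma PW_114: "PW 114 = [0,2,2,2,0,0]" by (subst PW_num, simp add: PW_113 gc_def)
lemma PW_115: "PW 115 = [0,0,2,2,2,0]" by (subst PW_num, simp add: PW_114 gc_def)
lemma PW_116: "PW 116 = [1,0,0,2,1,0]" by (subst PW_num, simp add: PW_115 gc_def)
lemma PW_117: "PW 117 = [2,1,0,0,0,0]" by (subst PW_num, simp add: PW_116 gc_def)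
lemma PW_118: "PW 118 = [0,2,1,0,0,0]" by (subst PW_num, simp add: PW_117 gc_def)
lemma PW_119: "PW 119 = [0,0,2,1,0,0]" by (subst PW_num, simp add: PW_118 gc_def)
lemma PW_120: "PW 120 = [0,0,0,2,1,0]" by (subst PW_num, simp add: PW_119 gc_def)
lemma PW_121: "PW 121 = [2,0,0,0,0,0]" by (subst PW_num, simp add: PW_120 gc_def)
lemma PW_122: "PW 122 = [0,2,0,0,0,0]" by (subst PW_num, simp add: PW_121 gc_def)
lemma PW_123: "PW 123 = [0,0,2,0,0,0]" by (subst PW_num, simp add: PW_122 gc_def)
lemma PW_124: "PW 124 = [0,0,0,2,0,0]" by (subst PW_num, simp add: PW_123 gc_def)
lemma PW_125: "PW 125 = [0,0,0,0,2,0]" by (subst PW_num, simp add: PW_124 gc_def)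
lemma PW_126: "PW 126 = [1,0,0,0,2,0]" by (subst PW_num, simp add: PW_125 gc_def)
lemma PW_127: "PW 127 = [1,1,0,0,2,0]" by (subst PW_num, simp add: PW_126 gc_def)
lemma PW_128: "PW 128 = [1,1,1,0,2,0]" by (subst PW_num, simp add: PW_127 gc_def)
lemma PW_129: "PW 129 = [1,1,1,1,2,0]" by (subst PW_num, simp add: PW_128 gc_def)
lemma PW_130: "PW 130 = [1,1,1,1,0,0]" by (subst PW_num, simp add: PW_129 gc_def)
lemma PW_131: "PW 131 = [0,1,1,1,1,0]" by (subst PW_num, simp add: PW_130 gc_def)
lemma PW_132: "PW 132 = [2,0,1,1,2,0]" by (subst PW_num, simp add: PW_131 gc_def)
lemma PW_133: "PW 133 = [1,2,0,1,0,0]" by (subst PW_num, simp add: PW_132 gc_def)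
lemma PW_134: "PW 134 = [0,1,2,0,1,0]" by (subst PW_num, simp add: PW_133 gc_def)
lemma PW_135: "PW 135 = [2,0,1,2,1,0]" by (subst PW_num, simp add: PW_134 gc_def)
lemma PW_136: "PW 136 = [2,2,0,1,0,0]" by (subst PW_num, simp add: PW_135 gc_def)
lemma PW_137: "PW 137 = [0,2,2,0,1,0]" by (subst PW_num, simp add: PW_136 gc_def)
lemma PW_138: "PW 138 = [2,0,2,2,1,0]" by (subst PW_num, simp add: PW_137 gc_def)
lemma PW_139: "PW 139 = [2,2,0,2,0,0]" by (subst PW_num, simp add: PW_138 gc_def)
lemma PW_140: "PW 140 = [0,2,2,0,2,0]" by (subst PW_num, simp add: PW_139 gc_def)
lemma PW_141: "PW 141 = [1,0,2,2,2,0]" by (subst PW_num, simp add: PW_140 gc_def)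
lemma PW_142: "PW 142 = [1,1,0,2,1,0]" by (subst PW_num, simp add: PW_141 gc_def)
lemma PW_143: "PW 143 = [2,1,1,0,0,0]" by (subst PW_num, simp add: PW_142 gc_def)
lemma PW_144: "PW 144 = [0,2,1,1,0,0]" by (subst PW_num, simp add: PW_143 gc_def)
lemma PW_145: "PW 145 = [0,0,2,1,1,0]" by (subst PW_num, simp add: PW_144 gc_def)
lemma PW_146: "PW 146 = [2,0,0,2,2,0]" by (subst PW_num, simp add: PW_145 gc_def)
lemma PW_147: "PW 147 = [1,2,0,0,1,0]" by (subst PW_num, simp add: PW_146 gc_def)
lemma PW_148: "PW 148 = [2,1,2,0,1,0]" by (subst PW_num, simp add: PW_147 gc_def)
lemma PW_149: "PW 149 = [2,2,1,2,1,0]" by (subst PW_num, simp add: PW_148 gc_def)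
lemma PW_150: "PW 150 = [2,2,2,1,0,0]" by (subst PW_num, simp add: PW_149 gc_def)
lemma PW_151: "PW 151 = [0,2,2,2,1,0]" by (subst PW_num, simp add: PW_150 gc_def)
lemma PW_152: "PW 152 = [2,0,2,2,0,0]" by (subst PW_num, simp add: PW_151 gc_def)
lemma PW_153: "PW 153 = [0,2,0,2,2,0]" by (subst PW_num, simp add: PW_152 gc_def)
lemma PW_154: "PW 154 = [1,0,2,0,1,0]" by (subst PW_num, simp add: PW_153 gc_def)
lemma PW_155: "PW 155 = [2,1,0,2,1,0]" by (subst PW_num, simp add: PW_154 gc_def)
lemma PW_156: "PW 156 = [2,2,1,0,0,0]" by (subst PW_num, simp add: PW_155 gc_def)
lemma PW_157: "PW 157 = [0,2,2,1,0,0]" by (subst PW_num, simp add: PW_156 gc_def)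
lemma PW_158: "PW 158 = [0,0,2,2,1,0]" by (subst PW_num, simp add: PW_157 gc_def)
lemma PW_159: "PW 159 = [2,0,0,2,0,0]" by (subst PW_num, simp add: PW_158 gc_def)
lemma PW_160: "PW 160 = [0,2,0,0,2,0]" by (subst PW_num, simp add: PW_159 gc_def)
lemma PW_161: "PW 161 = [1,0,2,0,2,0]" by (subst PW_num, simp add: PW_160 gc_def)
lemma PW_162: "PW 162 = [1,1,0,2,2,0]" by (subst PW_num, simp add: PW_161 gc_def)
lemma PW_163: "PW 163 = [1,1,1,0,1,0]" by (subst PW_num, simp add: PW_162 gc_def)
lemma PW_164: "PW 164 = [2,1,1,1,1,0]" by (subst PW_num, simp add: PW_163 gc_def)
lemma PW_165: "PW 165 = [2,2,1,1,2,0]" by (subst PW_num, simp add: PW_164 gc_def)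
lemma PW_166: "PW 166 = [1,2,2,1,0,0]" by (subst PW_num, simp add: PW_165 gc_def)
lemma PW_167: "PW 167 = [0,1,2,2,1,0]" by (subst PW_num, simp add: PW_166 gc_def)
lemma PW_168: "PW 168 = [2,0,1,2,0,0]" by (subst PW_num, simp add: PW_167 gc_def)
lemma PW_169: "PW 169 = [0,2,0,1,2,0]" by (subst PW_num, simp add: PW_168 gc_def)
lemma PW_170: "PW 170 = [1,0,2,0,0,0]" by (subst PW_num, simp add: PW_169 gc_def)
lemma PW_171: "PW 171 = [0,1,0,2,0,0]" by (subst PW_num, simp add: PW_170 gc_def)
lemma PW_172: "PW 172 = [0,0,1,0,2,0]" by (subst PW_num, simp add: PW_171 gc_def)
lemma PW_173: "PW 173 = [1,0,0,1,2,0]" by (subst PW_num, simp add: PW_172 gc_def)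
lemma PW_174: "PW 174 = [1,1,0,0,0,0]" by (subst PW_num, simp add: PW_173 gc_def)
lemma PW_175: "PW 175 = [0,1,1,0,0,0]" by (subst PW_num, simp add: PW_174 gc_def)
lemma PW_176: "PW 176 = [0,0,1,1,0,0]" by (subst PW_num, simp add: PW_175 gc_def)
lemma PW_177: "PW 177 = [0,0,0,1,1,0]" by (subst PW_num, simp add: PW_176 gc_def)
lemma PW_178: "PW 178 = [2,0,0,0,2,0]" by (subst PW_num, simp add: PW_177 gc_def)
lemma PW_179: "PW 179 = [1,2,0,0,2,0]" by (subst PW_num, simp add: PW_178 gc_def)
lemma PW_180: "PW 180 = [1,1,2,0,2,0]" by (subst PW_num, simp add: PW_179 gc_def)
lemma PW_181: "PW 181 = [1,1,1,2,2,0]" by (subst PW_num, simp add: PW_180 gc_def)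
lemma PW_182: "PW 182 = [1,1,1,1,1,0]" by (subst PW_num, simp add: PW_181 gc_def)
lemma PW_183: "PW 183 = [2,1,1,1,2,0]" by (subst PW_num, simp add: PW_182 gc_def)
lemma PW_184: "PW 184 = [1,2,1,1,0,0]" by (subst PW_num, simp add: PW_183 gc_def)
lemma PW_185: "PW 185 = [0,1,2,1,1,0]" by (subst PW_num, simp add: PW_184 gc_def)
lemma PW_186: "PW 186 = [2,0,1,2,2,0]" by (subst PW_num, simp add: PW_185 gc_def)
lemma PW_187: "PW 187 = [1,2,0,1,1,0]" by (subst PW_num, simp add: PW_186 gc_def)
lemma PW_188: "PW 188 = [2,1,2,0,2,0]" by (subst PW_num, simp add: PW_187 gc_def)
lemma PW_189: "PW 189 = [1,2,1,2,2,0]" by (subst PW_num, simp add: PW_188 gc_def)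
lemma PW_190: "PW 190 = [1,1,2,1,1,0]" by (subst PW_num, simp add: PW_189 gc_def)
lemma PW_191: "PW 191 = [2,1,1,2,2,0]" by (subst PW_num, simp add: PW_190 gc_def)
lemma PW_192: "PW 192 = [1,2,1,1,1,0]" by (subst PW_num, simp add: PW_191 gc_def)
lemma PW_193: "PW 193 = [2,1,2,1,2,0]" by (subst PW_num, simp add: PW_192 gc_def)
lemma PW_194: "PW 194 = [1,2,1,2,0,0]" by (subst PW_num, simp add: PW_193 gc_def)
lemma PW_195: "PW 195 = [0,1,2,1,2,0]" by (subst PW_num, simp add: PW_194 gc_def)
lemma PW_196: "PW 196 = [1,0,1,2,0,0]" by (subst PW_num, simp add: PW_195 gc_def)
lemma PW_197: "PW 197 = [0,1,0,1,2,0]" by (subst PW_num, simp add: PW_196 gc_def)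
lemma PW_198: "PW 198 = [1,0,1,0,0,0]" by (subst PW_num, simp add: PW_197 gc_def)
lemma PW_199: "PW 199 = [0,1,0,1,0,0]" by (subst PW_num, simp add: PW_198 gc_def)
lemma PW_200: "PW 200 = [0,0,1,0,1,0]" by (subst PW_num, simp add: PW_199 gc_def)
lemma PW_201: "PW 201 = [2,0,0,1,1,0]" by (subst PW_num, simp add: PW_200 gc_def)
lemma PW_202: "PW 202 = [2,2,0,0,2,0]" by (subst PW_num, simp add: PW_201 gc_def)
lemma PW_203: "PW 203 = [1,2,2,0,2,0]" by (subst PW_num, simp add: PW_202 gc_def)
lemma PW_204: "PW 204 = [1,1,2,2,2,0]" by (subst PW_num, simp add: PW_203 gc_def)
lemma PW_205: "PW 205 = [1,1,1,2,1,0]" by (subst PW_num, simp add: PW_204 gc_def)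
lemma PW_206: "PW 206 = [2,1,1,1,0,0]" by (subst PW_num, simp add: PW_205 gc_def)
lemma PW_207: "PW 207 = [0,2,1,1,1,0]" by (subst PW_num, simp add: PW_206 gc_def)
lemma PW_208: "PW 208 = [2,0,2,1,2,0]" by (subst PW_num, simp add: PW_207 gc_def)
lemma PW_209: "PW 209 = [1,2,0,2,0,0]" by (subst PW_num, simp add: PW_208 gc_def)
lemma PW_210: "PW 210 = [0,1,2,0,2,0]" by (subst PW_num, simp add: PW_209 gc_def)
lemma PW_211: "PW 211 = [1,0,1,2,2,0]" by (subst PW_num, simp add: PW_210 gc_def)
lemma PW_212: "PW 212 = [1,1,0,1,1,0]" by (subst PW_num, simp add: PW_211 gc_def)
lemma PW_213: "PW 213 = [2,1,1,0,2,0]" by (subst PW_num, simp add: PW_212 gc_def)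
lemma PW_214: "PW 214 = [1,2,1,1,2,0]" by (subst PW_num, simp add: PW_213 gc_def)
lemma PW_215: "PW 215 = [1,1,2,1,0,0]" by (subst PW_num, simp add: PW_214 gc_def)
lemma PW_216: "PW 216 = [0,1,1,2,1,0]" by (subst PW_num, simp add: PW_215 gc_def)
lemma PW_217: "PW 217 = [2,0,1,1,0,0]" by (subst PW_num, simp add: PW_216 gc_def)
lemma PW_218: "PW 218 = [0,2,0,1,1,0]" by (subst PW_num, simp add: PW_217 gc_def)
lemma PW_219: "PW 219 = [2,0,2,0,2,0]" by (subst PW_num, simp add: PW_218 gc_def)
lemma PW_220: "PW 220 = [1,2,0,2,2,0]" by (subst PW_num, simp add: PW_219 gc_def)
lemma PW_221: "PW 221 = [1,1,2,0,1,0]" by (subst PW_num, simp add: PW_220 gc_def)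
lemma PW_222: "PW 222 = [2,1,1,2,1,0]" by (subst PW_num, simp add: PW_221 gc_def)
lemma PW_223: "PW 223 = [2,2,1,1,0,0]" by (subst PW_num, simp add: PW_222 gc_def)
lemma PW_224: "PW 224 = [0,2,2,1,1,0]" by (subst PW_num, simp add: PW_223 gc_def)
lemma PW_225: "PW 225 = [2,0,2,2,2,0]" by (subst PW_num, simp add: PW_224 gc_def)
lemma PW_226: "PW 226 = [1,2,0,2,1,0]" by (subst PW_num, simp add: PW_225 gc_def)
lemma PW_227: "PW 227 = [2,1,2,0,0,0]" by (subst PW_num, simp add: PW_226 gc_def)
lemma PW_228: "PW 228 = [0,2,1,2,0,0]" by (subst PW_num, simp add: PW_227 gc_def)
lemma PW_229: "PW 229 = [0,0,2,1,2,0]" by (subst PW_num, simp add: PW_228 gc_def)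
lemma PW_230: "PW 230 = [1,0,0,2,0,0]" by (subst PW_num, simp add: PW_229 gc_def)
lemma PW_231: "PW 231 = [0,1,0,0,2,0]" by (subst PW_num, simp add: PW_230 gc_def)
lemma PW_232: "PW 232 = [1,0,1,0,2,0]" by (subst PW_num, simp add: PW_231 gc_def)
lemma PW_233: "PW 233 = [1,1,0,1,2,0]" by (subst PW_num, simp add: PW_232 gc_def)
lemma PW_234: "PW 234 = [1,1,1,0,0,0]" by (subst PW_num, simp add: PW_233 gc_def)
lemma PW_235: "PW 235 = [0,1,1,1,0,0]" by (subst PW_num, simp add: PW_234 gc_def)
lemma PW_236: "PW 236 = [0,0,1,1,1,0]" by (subst PW_num, simp add: PW_235 gc_def)
lemma PW_237: "PW 237 = [2,0,0,1,2,0]" by (subst PW_num, simp add: PW_236 gc_def)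
lemma PW_238: "PW 238 = [1,2,0,0,0,0]" by (subst PW_num, simp add: PW_237 gc_def)
lemma PW_239: "PW 239 = [0,1,2,0,0,0]" by (subst PW_num, simp add: PW_238 gc_def)
lemma PW_240: "PW 240 = [0,0,1,2,0,0]" by (subst PW_num, simp add: PW_239 gc_def)
lemma PW_241: "PW 241 = [0,0,0,1,2,0]" by (subst PW_num, simp add: PW_240 gc_def)
lemma PW_242: "PW 242 = [1,0,0,0,0,0]" by (subst PW_num, simp add: PW_241 gc_def)



definition e0 :: "'a::field^6" where "e0 = V [1,0,0,0,0,0]"
definition e5 :: "'a::field^6" where "e5 = V [0,0,0,0,0,1]"
definition pw :: "nat \<Rightarrow> 'a::field^6" where "pw t = (gv ^^ t) e0"

lemma pw_add: "pw (s + t) = (gv ^^ s) (pw t)"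
  unfolding pw_def by (simp add: funpow_add)

lemma pw_comp5: "pw t $ 5 = 0"
  unfolding pw_def e0_def by (simp add: gvp_comp5 V_comp)

lemma e5_comp5: "e5 $ 5 = 1"
  unfolding e5_def by (simp add: V_comp)

lemma gv_e5: "gv e5 = e5"
proof (subst vec_eq_iff, rule allI)
  fix i :: 6
  show "gv e5 $ i = e5 $ i"
    using exhaust_6[of i] unfolding e5_def gv_def by (elim disjE) (simp_all add: V_comp)
qed

lemma gvp_e5: "(gv ^^ n) e5 = e5"
  by (induction n) (simp_all add: gv_e5)

lemma div242: "g dvd (242::nat) \<Longrightarrow> g < 242 \<Longrightarrow> g dvd 22 \<or> g dvd 121"
proof (cases "even g")
  case False
  assume d: "g dvd (242::nat)"
  have cp: "coprime g 2" using False by simp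
  have "g dvd 2 * 121" using d by simp
  then show ?thesis using coprime_dvd_mult_right_iff[OF cp, of 121] by simp
next
  case True
  assume d: "g dvd (242::nat)" and l: "g < 242"
  then obtain h where h: "g = 2 * h" using True by blast
  have "2 * h dvd 2 * 121" using d h by simp
  then have "h dvd 11 ^ 2" by simp
  moreover have "prime (11::nat)" by simp
  ultimately obtain i where i: "i \<le> 2" "h = 11 ^ i" using divides_primepow_nat by blast
  then have "i = 0 \<or> i = 1 \<or> i = 2" by linarith
  then show ?thesis
  proof (elim disjE)
    assume "i = 0" then have "g = 2" using h i by simp
    then show ?thesis by simp
  next
    assume "i = 1" then have "g = 22" using h i by simp
    then show ?thesis by simp
  next
    assume "i = 2" then have "g = 242" using h i by simp
    then show ?thesis using l by simp
  qed
qed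

context
  assumes card3: "CARD('a::field) = 3"
begin

lemma pw_V: "(pw t :: 'a^6) = V (PW t)"
proof (induction t)
  case 0 then show ?case by (simp add: pw_def e0_def)
next
  case (Suc t)
  have "(pw (Suc t) :: 'a^6) = gv (pw t)" unfolding pw_def by simp
  also have "\<dots> = V (PW (Suc t))" using Suc gv_V[OF card3 valid_PW] by simp
  finally show ?case .
qed

lemma e0_ne: "(e0 :: 'a^6) \<noteq> 0"
proof
  assume "(e0 :: 'a^6) = 0"
  then have "(e0 :: 'a^6) $ 0 = 0" by simp
  then show False unfolding e0_def by (simp add: V_comp)
qed

lemma pw121: "(pw 121 :: 'a^6) = - e0"
proof -
  have "- (e0 :: 'a^6) = V (negl [1,0,0,0,0,0])"
    unfolding e0_def by (rule V_neg[OF card3]) (simp add: valid_def)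
  also have "\<dots> = V (PW 121)" by (simp add: PW_121 negl_def)
  finally show ?thesis by (simp add: pw_V)
qed

lemma pw_plus121: "(pw (t + 121) :: 'a^6) = - pw t"
proof -
  have "(pw (t + 121) :: 'a^6) = (gv ^^ t) (pw 121)" by (rule pw_add)
  also have "\<dots> = (gv ^^ t) (- e0)" by (simp only: pw121)
  also have "\<dots> = - pw t" by (simp add: gvp_neg pw_def)
  finally show ?thesis .
qed

lemma pw_plus242: "(pw (t + 242) :: 'a^6) = pw t"
  using pw_plus121[of "t + 121"] pw_plus121[of t] by (simp add: add.assoc)

lemma pw_mod242: "(pw t :: 'a^6) = pw (t mod 242)"
proof (induction t rule: less_induct)
  case (less t)
  show ?case
  proof (cases "t < 242")
    case True then show ?thesis by simp
  next
    case False
    then have "(pw t :: 'a^6) = pw ((t - 242) + 242)" by simp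
    also have "\<dots> = pw (t - 242)" by (rule pw_plus242)
    also have "\<dots> = pw ((t - 242) mod 242)" using less.IH[of "t - 242"] False by simp
    also have "(t - 242) mod 242 = t mod 242" using False le_mod_geq[of 242 t] by simp
    finally show ?thesis .
  qed
qed

lemma pw_mod121: "(pw t :: 'a^6) = pw (t mod 121) \<or> (pw t :: 'a^6) = - pw (t mod 121)"
proof -
  have m: "(t mod 242) mod 121 = t mod 121" by (simp add: mod_mod_cancel)
  show ?thesis
  proof (cases "t mod 242 < 121")
    case True then show ?thesis using pw_mod242[of t] m by simp
  next
    case False
    then have "(pw (t mod 242) :: 'a^6) = pw ((t mod 242 - 121) + 121)" by simp
    also have "\<dots> = - pw (t mod 242 - 121)" by (rule pw_plus121)
    finally have "(pw (t mod 242) :: 'a^6) = - pw (t mod 242 - 121)" .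
    moreover have "t mod 242 - 121 = t mod 121"
    proof -
      have r: "t mod 242 < 242" by simp
      have "t mod 121 = (t mod 242) mod 121" using m by simp
      also have "\<dots> = (t mod 242 - 121) mod 121" using False le_mod_geq[of 121 "t mod 242"] by simp
      also have "\<dots> = t mod 242 - 121" using r by simp
      finally show ?thesis by simp
    qed
    ultimately have "(pw t :: 'a^6) = - pw (t mod 121)" using pw_mod242[of t] by simp
    then show ?thesis by (rule disjI2)
  qed
qed

lemma pw_per: "(pw d :: 'a^6) = pw 0 \<Longrightarrow> pw (d + t) = (pw t :: 'a^6)"
proof -
  assume h: "(pw d :: 'a^6) = pw 0"
  have "(pw (d + t) :: 'a^6) = (gv ^^ t) (pw d)" using pw_add[of t d] by (simp add: add.commute)
  also have "\<dots> = (gv ^^ t) (pw 0)" using h by simp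
  also have "\<dots> = pw t" using pw_add[of t 0, where 'a='a] by simp
  finally show ?thesis .
qed

lemma pw_mult: "(pw d :: 'a^6) = pw 0 \<Longrightarrow> pw (k * d) = (pw 0 :: 'a^6)"
proof (induction k)
  case 0 then show ?case by simp
next
  case (Suc k)
  then show ?case using pw_per[of d "k * d"] by (simp add: add.commute)
qed

lemma pw_ne_0: "0 < d \<Longrightarrow> d < 242 \<Longrightarrow> (pw d :: 'a^6) \<noteq> pw 0"
proof
  assume d: "0 < d" "d < 242" and h: "(pw d :: 'a^6) = pw 0"
  have "d \<noteq> 0" using d by simp
  from bezout_nat[OF this, of 242] obtain x y where xy: "d * x = 242 * y + gcd d 242" by blast
  define g where "g = gcd d 242"
  have p242: "(pw 242 :: 'a^6) = pw 0" using pw_plus242[of 0] by simp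
  have "(pw (d * x) :: 'a^6) = pw 0" using pw_mult[OF h, of x] by (simp add: mult.commute)
  moreover have "(pw (242 * y + g) :: 'a^6) = pw g"
    using pw_per[OF pw_mult[OF p242, of y]] by (simp add: mult.commute)
  ultimately have pg: "(pw g :: 'a^6) = pw 0" using xy g_def by simp
  have "g dvd 242" unfolding g_def by simp
  moreover have "g < 242"
  proof -
    have "gcd d 242 \<le> d" using d by (intro gcd_le1_nat) simp
    then show ?thesis unfolding g_def using d by linarith
  qed
  ultimately have "g dvd 22 \<or> g dvd 121" by (rule div242)
  then show False
  proof
    assume "g dvd 22"
    then obtain k where "22 = g * k" by blast
    then have "(pw 22 :: 'a^6) = pw 0" using pw_mult[OF pg, of k] by (simp add: mult.commute)
    then have "V (PW 22) = (V (PW 0) :: 'a^6)" by (simp add: pw_V)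
    then have "PW 22 = PW 0" using V_inj[OF card3 valid_PW valid_PW] by blast
    then show False by (simp add: PW_22)
  next
    assume "g dvd 121"
    then obtain k where "121 = g * k" by blast
    then have "(pw 121 :: 'a^6) = pw 0" using pw_mult[OF pg, of k] by (simp add: mult.commute)
    then have "- (e0 :: 'a^6) = pw 0" by (simp only: pw121)
    then have "- (e0 :: 'a^6) = e0" by (simp add: pw_def)
    then show False using neg_self[OF card3] e0_ne by blast
  qed
qed

lemma pw_inj: "s < 242 \<Longrightarrow> t < 242 \<Longrightarrow> (pw s :: 'a^6) = pw t \<Longrightarrow> s = t"
proof (rule ccontr)
  assume h: "s < 242" "t < 242" "(pw s :: 'a^6) = pw t" "s \<noteq> t"
  have key: "\<And>s t. s < t \<Longrightarrow> t < 242 \<Longrightarrow> (pw s :: 'a^6) = pw t \<Longrightarrow> False"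
  proof -
    fix s t :: nat assume st: "s < t" "t < 242" "(pw s :: 'a^6) = pw t"
    have "(pw 0 :: 'a^6) = pw (242 - s + s)" using pw_plus242[of 0] st by simp
    also have "\<dots> = (gv ^^ (242 - s)) (pw s)" by (rule pw_add)
    also have "\<dots> = (gv ^^ (242 - s)) (pw t)" using st by simp
    also have "\<dots> = pw (242 - s + t)" by (rule pw_add[symmetric])
    also have "242 - s + t = (t - s) + 242" using st by simp
    also have "(pw ((t - s) + 242) :: 'a^6) = pw (t - s)" by (rule pw_plus242)
    finally have "(pw (t - s) :: 'a^6) = pw 0" by simp
    then show False using pw_ne_0[of "t - s"] st by simp
  qed
  show False
  proof (cases "s < t")
    case True then show False using key h by blast
  next
    case False then have "t < s" using h by simp
    then show False using key[of t s] h by simp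
  qed
qed

lemma pw_ne_zero: "(pw t :: 'a^6) \<noteq> 0"
proof
  assume h: "(pw t :: 'a^6) = 0"
  define r where "r = t mod 242"
  have r: "r < 242" unfolding r_def by simp
  have "(pw r :: 'a^6) = 0" using h pw_mod242[of t] r_def by simp
  have "(pw 0 :: 'a^6) = pw (242 - r + r)" using pw_plus242[of 0] r by simp
  also have "\<dots> = (gv ^^ (242 - r)) (pw r)" by (rule pw_add)
  also have "\<dots> = 0" using \<open>pw r = 0\<close> gvp_zero by simp
  finally show False using e0_ne by (simp add: pw_def)
qed

end

definition pv :: "nat \<Rightarrow> 'a::field^6" where
  "pv c = (if c < 121 then pw c else if c = 121 then e5 else pw (c - 122) + e5)"

definition pmv :: "'a::field^6 \<Rightarrow> 'a^6 \<Rightarrow> bool" where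
  "pmv w z \<longleftrightarrow> w = z \<or> w = - z"

lemma pmv_refl: "pmv z z" by (simp add: pmv_def)
lemma pmv_sym: "pmv w z \<Longrightarrow> pmv z w" by (auto simp: pmv_def)
lemma pmv_trans: "pmv w z \<Longrightarrow> pmv z y \<Longrightarrow> pmv w y" by (auto simp: pmv_def)
lemma pmv_neg: "pmv w (- z) \<longleftrightarrow> pmv w z" by (auto simp: pmv_def)
lemma pmv_negl: "pmv (- w) z \<longleftrightarrow> pmv w z" by (auto simp: pmv_def)

definition shj :: "nat \<Rightarrow> nat \<Rightarrow> nat" where
  "shj j c = (if c < 121 then (c + 2 * j) mod 121 else if c = 121 then 121
              else 122 + (c + 2 * j + 120) mod 242)"

lemma shj_lt: "c < 364 \<Longrightarrow> shj j c < 364"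
proof -
  have "(c + 2 * j) mod 121 < 121" "(c + 2 * j + 120) mod 242 < 242" by simp_all
  then have "(c + 2 * j) mod 121 < 364" "122 + (c + 2 * j + 120) mod 242 < 364" by linarith+
  then show ?thesis unfolding shj_def by simp
qed

lemma shj_0: "c < 364 \<Longrightarrow> shj 0 c = c"
proof -
  assume c: "c < 364"
  show ?thesis
  proof (cases "c < 122")
    case True then show ?thesis unfolding shj_def by simp
  next
    case False
    then have "c + 120 = (c - 122) + 242 * 1" by simp
    then have "(c + 120) mod 242 = ((c - 122) + 242 * 1) mod 242" by (rule arg_cong)
    also have "\<dots> = (c - 122) mod 242" by (rule mod_mult_self2)
    also have "\<dots> = c - 122" using c by simp
    finally show ?thesis unfolding shj_def using False by simp
  qed
qed

lemma shj_comp: "c < 364 \<Longrightarrow> shj j (shj k c) = shj (j + k) c"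
proof -
  assume c: "c < 364"
  consider "c < 121" | "c = 121" | "c \<ge> 122" by linarith
  then show ?thesis
  proof cases
    case 1
    have "((c + 2 * k) mod 121 + 2 * j) mod 121 = (c + 2 * k + 2 * j) mod 121"
      by (rule mod_add_left_eq)
    also have "c + 2 * k + 2 * j = c + 2 * (j + k)" by simp
    finally have e: "((c + 2 * k) mod 121 + 2 * j) mod 121 = (c + 2 * (j + k)) mod 121" .
    have "(c + 2 * k) mod 121 < 121" by simp
    then show ?thesis using 1 e unfolding shj_def by simp
  next
    case 2 then show ?thesis unfolding shj_def by simp
  next
    case 3
    have "(122 + (c + 2 * k + 120) mod 242 + 2 * j + 120) mod 242
          = ((c + 2 * k + 120) mod 242 + (2 * j + 242)) mod 242" by (simp add: algebra_simps)
    also have "\<dots> = (c + 2 * k + 120 + (2 * j + 242)) mod 242" by (rule mod_add_left_eq)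
    also have "c + 2 * k + 120 + (2 * j + 242) = (c + 2 * (j + k) + 120) + 242 * 1" by simp
    also have "(c + 2 * (j + k) + 120 + 242 * 1) mod 242 = (c + 2 * (j + k) + 120) mod 242"
      by (rule mod_mult_self2)
    finally have e: "(122 + (c + 2 * k + 120) mod 242 + 2 * j + 120) mod 242 = (c + 2 * (j + k) + 120) mod 242" .
    then show ?thesis using 3 unfolding shj_def by simp
  qed
qed

lemma shj_per: "shj (j + 121) c = shj j c"
proof -
  have a: "(c + 2 * (j + 121)) mod 121 = (c + 2 * j) mod 121"
  proof -
    have "c + 2 * (j + 121) = (c + 2 * j) + 121 * 2" by simp
    then have "(c + 2 * (j + 121)) mod 121 = ((c + 2 * j) + 121 * 2) mod 121" by (rule arg_cong)
    also have "\<dots> = (c + 2 * j) mod 121" by (rule mod_mult_self2)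
    finally show ?thesis .
  qed
  have b: "(c + 2 * (j + 121) + 120) mod 242 = (c + 2 * j + 120) mod 242"
  proof -
    have "c + 2 * (j + 121) + 120 = (c + 2 * j + 120) + 242 * 1" by simp
    then have "(c + 2 * (j + 121) + 120) mod 242 = ((c + 2 * j + 120) + 242 * 1) mod 242" by (rule arg_cong)
    also have "\<dots> = (c + 2 * j + 120) mod 242" by (rule mod_mult_self2)
    finally show ?thesis .
  qed
  show ?thesis unfolding shj_def using a b by (simp only: if_cancel)
qed

lemma shj_per_mult: "shj (j + 121 * k) c = shj j c"
proof (induction k)
  case 0 then show ?case by simp
next
  case (Suc k)
  have "shj (j + 121 * Suc k) c = shj ((j + 121 * k) + 121) c" by (simp add: algebra_simps)
  also have "\<dots> = shj j c" using shj_per Suc by simp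
  finally show ?case .
qed

lemma shj_mod: "shj j c = shj (j mod 121) c"
  using shj_per_mult[of "j mod 121" "j div 121" c] by simp

lemma shj_inv: "c < 364 \<Longrightarrow> shj (120 * m) (shj m c) = c"
proof -
  assume c: "c < 364"
  have "shj (120 * m) (shj m c) = shj (0 + 121 * m) c" using shj_comp[OF c] by simp
  also have "\<dots> = c" using shj_per_mult[of 0 m c] shj_0[OF c] by simp
  finally show ?thesis .
qed

lemma shj_inv2: "c < 364 \<Longrightarrow> shj m (shj (120 * m) c) = c"
proof -
  assume c: "c < 364"
  have "shj m (shj (120 * m) c) = shj (0 + 121 * m) c" using shj_comp[OF c] by simp
  also have "\<dots> = c" using shj_per_mult[of 0 m c] shj_0[OF c] by simp
  finally show ?thesis .
qed

lemma shj_inj: "c < 364 \<Longrightarrow> c' < 364 \<Longrightarrow> shj j c = shj j c' \<Longrightarrow> c = c'"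
proof -
  assume c: "c < 364" and c': "c' < 364" and e: "shj j c = shj j c'"
  have "c = shj (120 * j) (shj j c)" using shj_inv[OF c] by simp
  also have "\<dots> = shj (120 * j) (shj j c')" using e by simp
  also have "\<dots> = c'" using shj_inv[OF c'] by simp
  finally show ?thesis .
qed

lemma orbit: "c < 364 \<Longrightarrow> \<exists>m r. r \<in> {0,121,122,123} \<and> c = shj m r"
proof -
  assume c: "c < 364"
  have "c < 121 \<or> c = 121 \<or> c \<ge> 122" by linarith
  then consider "c < 121" | "c = 121" | "c \<ge> 122" "even (c - 122)" | "c \<ge> 122" "odd (c - 122)"
    by (cases "even (c - 122)") blast+
  then show ?thesis
  proof cases
    case 1
    have "(2 * (61 * c)) mod 121 = c"
    proof -
      have e: "2 * (61 * c) = c + c * 121" by simp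
      have "(c + c * 121) mod 121 = c mod 121" by (rule mod_mult_self1)
      also have "\<dots> = c" using 1 by simp
      finally show ?thesis by (simp only: e)
    qed
    then have "shj (61 * c) 0 = c" unfolding shj_def by simp
    then show ?thesis by (intro exI[of _ "61 * c"] exI[of _ 0]) simp
  next
    case 2
    then have "shj 0 121 = c" unfolding shj_def by simp
    then show ?thesis by (intro exI[of _ 0] exI[of _ 121]) simp
  next
    case 3
    from 3(2) obtain m where m: "c - 122 = 2 * m" by (rule evenE)
    have "(122 + 2 * m + 120) mod 242 = (2 * m + 242 * 1) mod 242" by (simp add: algebra_simps)
    also have "\<dots> = (2 * m) mod 242" by (rule mod_mult_self2)
    also have "\<dots> = 2 * m" using m c by simp
    finally have "shj m 122 = c" unfolding shj_def using m 3 by simp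
    then show ?thesis by (intro exI[of _ m] exI[of _ 122]) simp
  next
    case 4
    from 4(2) obtain m where m: "c - 122 = 2 * m + 1" by (rule oddE)
    have "(123 + 2 * m + 120) mod 242 = ((2 * m + 1) + 242 * 1) mod 242" by (simp add: algebra_simps)
    also have "\<dots> = (2 * m + 1) mod 242" by (rule mod_mult_self2)
    also have "\<dots> = 2 * m + 1" using m c by simp
    finally have "shj m 123 = c" unfolding shj_def using m 4 by simp
    then show ?thesis by (intro exI[of _ m] exI[of _ 123]) simp
  qed
qed

context
  assumes card3: "CARD('a::field) = 3"
begin

lemma pv_comp5: "(pv c :: 'a^6) $ 5 = (if c < 121 then 0 else 1)"
  unfolding pv_def by (simp add: pw_comp5 e5_comp5)

lemma pv_ne0: "(pv c :: 'a^6) \<noteq> 0"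
proof (cases "c < 121")
  case True then show ?thesis unfolding pv_def using pw_ne_zero[OF card3] by simp
next
  case False
  then have "(pv c :: 'a^6) $ 5 = 1" by (simp add: pv_comp5)
  then show ?thesis by auto
qed

lemma one_ne_neg1: "(1::'a) \<noteq> -1" by (rule F3(3)[OF card3])

lemma pv_uniq: "c < 364 \<Longrightarrow> c' < 364 \<Longrightarrow> pmv (pv c :: 'a^6) (pv c') \<Longrightarrow> c = c'"
proof -
  assume c: "c < 364" and c': "c' < 364" and p: "pmv (pv c :: 'a^6) (pv c')"
  have five: "(pv c :: 'a^6) $ 5 = pv c' $ 5 \<or> (pv c :: 'a^6) $ 5 = - (pv c' $ 5)"
    using p unfolding pmv_def by auto
  consider "c < 121" "c' < 121" | "c < 121" "c' \<ge> 121" | "c \<ge> 121" "c' < 121" | "c \<ge> 121" "c' \<ge> 121"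
    by linarith
  then show "c = c'"
  proof cases
    case 1
    then have "(pw c :: 'a^6) = pw c' \<or> (pw c :: 'a^6) = - pw c'"
      using p unfolding pmv_def pv_def by simp
    then show ?thesis
    proof
      assume "(pw c :: 'a^6) = pw c'"
      then show ?thesis using pw_inj[OF card3] 1 by simp
    next
      assume "(pw c :: 'a^6) = - pw c'"
      then have "(pw c :: 'a^6) = pw (c' + 121)" using pw_plus121[OF card3, of c'] by simp
      then have "c = c' + 121" using pw_inj[OF card3] 1 by simp
      then show ?thesis using 1 by simp
    qed
  next
    case 2 then show ?thesis using five one_ne_neg1 by (simp add: pv_comp5)
  next
    case 3 then show ?thesis using five one_ne_neg1 by (simp add: pv_comp5)
  next
    case 4
    have pl: "(pv c :: 'a^6) = pv c'"
    proof -
      have "(pv c :: 'a^6) $ 5 = 1" "(pv c' :: 'a^6) $ 5 = 1" using 4 by (simp_all add: pv_comp5)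
      then show ?thesis using p one_ne_neg1 unfolding pmv_def by auto
    qed
    consider "c = 121" "c' = 121" | "c = 121" "c' \<ge> 122" | "c \<ge> 122" "c' = 121" | "c \<ge> 122" "c' \<ge> 122"
      using 4 by linarith
    then show ?thesis
    proof cases
      case 1 then show ?thesis by simp
    next
      case 2
      then have "(e5 :: 'a^6) = pw (c' - 122) + e5" using pl unfolding pv_def by simp
      then have "(pw (c' - 122) :: 'a^6) = 0" by simp
      then show ?thesis using pw_ne_zero[OF card3] by blast
    next
      case 3
      then have "(e5 :: 'a^6) = pw (c - 122) + e5" using pl unfolding pv_def by simp
      then have "(pw (c - 122) :: 'a^6) = 0" by simp
      then show ?thesis using pw_ne_zero[OF card3] by blast
    next
      case 4
      then have "(pw (c - 122) :: 'a^6) = pw (c' - 122)" using pl unfolding pv_def by simp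
      then have "c - 122 = c' - 122" using pw_inj[OF card3] 4 c c' by simp
      then show ?thesis using 4 by simp
    qed
  qed
qed

lemma pv_neq_neg: "(pv c :: 'a^6) \<noteq> - pv c"
proof
  assume h: "(pv c :: 'a^6) = - pv c"
  then have "- (pv c :: 'a^6) = pv c" by simp
  then have "(pv c :: 'a^6) = 0" by (rule neg_self[OF card3])
  then show False using pv_ne0 by simp
qed

lemma card_nonzero: "card {w :: 'a^6. w \<noteq> 0} = 728"
proof -
  have "{w :: 'a^6. w \<noteq> 0} = UNIV - {0}" by auto
  moreover have "CARD('a^6) = 729" using card3 by (simp add: CARD_vec)
  ultimately show ?thesis by (simp add: card_Diff_singleton)
qed

lemma finV: "finite (UNIV :: ('a^6) set)"
proof -
  have "(UNIV :: ('a^6) set) \<subseteq> V ` {xs. set xs \<subseteq> {..<3} \<and> length xs = 6}"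
  proof
    fix v :: "'a^6"
    obtain xs where "valid xs" "v = V xs" using V_surj[OF card3] by blast
    then show "v \<in> V ` {xs. set xs \<subseteq> {..<3} \<and> length xs = 6}" unfolding valid_def by auto
  qed
  moreover have "finite {xs::nat list. set xs \<subseteq> {..<3} \<and> length xs = 6}"
    by (rule finite_lists_length_eq) simp
  ultimately show ?thesis using finite_subset by blast
qed

lemma pv_cover: "(w :: 'a^6) \<noteq> 0 \<Longrightarrow> \<exists>c<364. pmv w (pv c)"
proof -
  assume w: "w \<noteq> 0"
  define f where "f = (\<lambda>(c, s). if s then (pv c :: 'a^6) else - pv c)"
  have inj: "inj_on f ({..<364} \<times> UNIV)"
  proof (rule inj_onI)
    fix x y assume x: "x \<in> {..<364::nat} \<times> (UNIV::bool set)" and y: "y \<in> {..<364::nat} \<times> (UNIV::bool set)"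
      and e: "f x = f y"
    obtain c s where cs: "x = (c, s)" by (cases x)
    obtain c' s' where cs': "y = (c', s')" by (cases y)
    have c: "c < 364" "c' < 364" using x y cs cs' by auto
    have e': "(if s then pv c else - pv c) = (if s' then (pv c' :: 'a^6) else - pv c')"
      using e cs cs' unfolding f_def by simp
    have "pmv (pv c :: 'a^6) (pv c')"
    proof (cases s)
      case True
      show ?thesis
      proof (cases s')
        case True then show ?thesis using e' \<open>s\<close> unfolding pmv_def by simp
      next
        case False then show ?thesis using e' \<open>s\<close> unfolding pmv_def by simp
      qed
    next
      case False
      show ?thesis
      proof (cases s')
        case True
        then have "- pv c = (pv c' :: 'a^6)" using e' \<open>\<not> s\<close> by simp
        then have "pv c = - (pv c' :: 'a^6)" by (metis minus_minus)
        then show ?thesis unfolding pmv_def by simp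
      next
        case False then show ?thesis using e' \<open>\<not> s\<close> unfolding pmv_def by simp
      qed
    qed
    then have cc: "c = c'" using pv_uniq c by blast
    have "s = s'"
    proof (rule ccontr)
      assume ss: "s \<noteq> s'"
      have "(pv c :: 'a^6) = - pv c"
      proof (cases s)
        case True then show ?thesis using e' ss cc by simp
      next
        case False
        then have "- pv c = (pv c :: 'a^6)" using e' ss cc by simp
        then show ?thesis by (metis minus_minus)
      qed
      then show False using pv_neq_neg by blast
    qed
    then show "x = y" using cs cs' cc by simp
  qed
  have "card (f ` ({..<364} \<times> UNIV)) = 728" using card_image[OF inj] by simp
  moreover have sub: "f ` ({..<364} \<times> UNIV) \<subseteq> {w :: 'a^6. w \<noteq> 0}"
  proof
    fix z assume "z \<in> f ` ({..<364} \<times> UNIV)"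
    then obtain c s where "z = f (c, s)" by auto
    then have "z = pv c \<or> z = - pv c" unfolding f_def by (cases s) simp_all
    then show "z \<in> {w :: 'a^6. w \<noteq> 0}" using pv_ne0 by auto
  qed
  moreover have "finite {w :: 'a^6. w \<noteq> 0}" using finV by (rule finite_subset[rotated]) simp
  ultimately have "f ` ({..<364} \<times> UNIV) = {w :: 'a^6. w \<noteq> 0}"
    using card_nonzero by (intro card_subset_eq) simp_all
  then have "w \<in> f ` ({..<364} \<times> UNIV)" using w by simp
  then obtain x where x: "x \<in> {..<364} \<times> UNIV" "w = f x" by (rule imageE)
  obtain c s where cs: "x = (c, s)" by (cases x)
  have "c < 364" using x cs by auto
  moreover have "pmv w (pv c)" using x cs unfolding f_def pmv_def by (cases s) simp_all
  ultimately show ?thesis by blast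
qed

definition pc :: "'a^6 \<Rightarrow> nat" where
  "pc w = (THE c. c < 364 \<and> pmv w (pv c))"

lemma pc_eq: "c < 364 \<Longrightarrow> pmv w (pv c) \<Longrightarrow> pc w = c"
proof -
  assume c: "c < 364" and p: "pmv w (pv c)"
  show "pc w = c" unfolding pc_def
  proof (rule the_equality)
    show "c < 364 \<and> pmv w (pv c)" using c p by simp
    fix c' assume h: "c' < 364 \<and> pmv w (pv c')"
    have "pmv (pv c' :: 'a^6) (pv c)" using pmv_trans[OF pmv_sym[OF conjunct2[OF h]] p] .
    then show "c' = c" using pv_uniq[of c' c] c h by blast
  qed
qed

lemma pc_props: "w \<noteq> 0 \<Longrightarrow> pc w < 364 \<and> pmv w (pv (pc w))"
proof -
  assume "w \<noteq> 0"
  then obtain c where c: "c < 364" "pmv w (pv c)" using pv_cover by blast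
  then have "pc w = c" by (rule pc_eq)
  then show ?thesis using c by simp
qed

end

definition LN :: "nat \<Rightarrow> nat list" where
  "LN i = (if i < 45 then (if i < 22 then (if i < 11 then (if i < 5 then (if i < 2 then (if i < 1 then [121,0,122,243] else [4,29,84,60]) else (if i < 3 then [126,124,201,51] else (if i < 4 then [247,88,227,342] else [3,240,266,350]))) else (if i < 8 then (if i < 6 then [125,269,188,105] else (if i < 7 then [246,250,182,8] else [56,19,36,30])) else (if i < 9 then [299,220,260,75] else (if i < 10 then [178,270,306,72] else [120,332,145,307])))) else (if i < 16 then (if i < 13 then (if i < 12 then [363,6,258,334] else [242,1,170,198]) else (if i < 14 then [2,248,354,283] else (if i < 15 then [245,200,357,107] else [79,249,343,356]))) else (if i < 19 then (if i < 17 then [322,234,312,9] else (if i < 18 then [294,174,169,104] else [173,309,344,63])) else (if i < 20 then [55,213,206,222] else (if i < 21 then [298,255,195,22] else [177,143,285,69]))))) else (if i < 33 then (if i < 27 then (if i < 24 then (if i < 23 then [115,360,165,314] else [358,78,211,338]) else (if i < 25 then [237,172,141,74] else (if i < 26 then [37,58,85,71] else [159,160,212,33]))) else (if i < 30 then (if i < 28 then [280,41,164,337] else (if i < 29 then [119,282,217,186] else [362,26,313,194])) else (if i < 31 then [241,300,209,65] else (if i < 32 then [108,57,90,47] else [230,319,176,46])))) else (if i < 39 then (if i < 36 then (if i < 34 then [351,295,254,77] else (if i < 35 then [24,264,252,302] else [146,202,347,49])) else (if i < 37 then [267,156,328,67] else (if i < 38 then [123,171,144,35] else [244,142,326,43])))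 else (if i < 42 then (if i < 40 then [39,38,91,34] else (if i < 41 then [161,187,271,45] else [110,276,325,157])) else (if i < 43 then [353,339,184,83] else (if i < 44 then [232,98,149,235] else [321,320,131,73])))))) else (if i < 68 then (if i < 56 then (if i < 50 then (if i < 47 then (if i < 46 then [32,359,134,128] else [154,263,278,70]) else (if i < 48 then [275,199,304,68] else (if i < 49 then [76,281,163,148] else [50,20,28,82]))) else (if i < 53 then (if i < 51 then [293,330,189,61] else (if i < 52 then [48,155,167,205] else [291,40,345,192])) else (if i < 54 then [97,197,310,130] else (if i < 55 then [219,52,210,203] else [340,116,301,261])))) else (if i < 62 then (if i < 59 then (if i < 57 then [54,136,336,355] else (if i < 58 then [297,292,175,106] else [262,323,151,62])) else (if i < 60 then [16,133,137,311] else (if i < 61 then [138,162,228,81] else [259,226,277,94]))) else (if i < 65 then (if i < 63 then [114,31,117,102] else (if i < 64 then [236,233,150,99] else [10,87,12,59])) else (if i < 66 then [253,231,223,42] else (if i < 67 then [132,153,180,44] else [152,11,296,215]))))) else (if i < 79 then (if i < 73 then (if i < 70 then (if i < 69 then [273,5,183,207] else [158,96,140,349]) else (if i < 71 then [279,341,166,66] else (if i < 72 then [95,290,324,190] else [103,352,251,214]))) else (if i < 76 then (if i < 74 then [225,179,272,101] else (if i < 75 then [346,147,286,113] else [118,268,191,193])) else (if i < 77 then [361,274,288,18] else (if i < 78 then [13,111,53,92] else [256,80,224,315])))) else (if i < 85 then (if i < 82 then (if i < 80 then [135,333,305,15] else (if i < 81 then [89,218,348,303] else [229,17,284,204])) else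 (if i < 83 then [64,109,100,93] else (if i < 84 then [317,14,327,239] else [196,139,265,21]))) else (if i < 88 then (if i < 86 then [23,257,221,129] else (if i < 87 then [289,308,331,7] else [168,25,316,181])) else (if i < 89 then [86,127,185,287] else (if i < 90 then [208,238,216,27] else [329,318,335,112])))))))"

definition lo :: "nat \<Rightarrow> nat" where
  "lo x = (if x < 182 then (if x < 91 then (if x < 45 then (if x < 22 then (if x < 11 then (if x < 5 then (if x < 2 then (if x < 1 then 0 else 12) else (if x < 3 then 13 else (if x < 4 then 4 else 1))) else (if x < 8 then (if x < 6 then 68 else (if x < 7 then 11 else 86)) else (if x < 9 then 6 else (if x < 10 then 16 else 64)))) else (if x < 16 then (if x < 13 then (if x < 12 then 67 else 64) else (if x < 14 then 77 else (if x < 15 then 83 else 79))) else (if x < 19 then (if x < 17 then 59 else (if x < 18 then 81 else 76)) else (if x < 20 then 7 else (if x < 21 then 49 else 84))))) else (if x < 33 then (if x < 27 then (if x < 24 then (if x < 23 then 20 else 85) else (if x < 25 then 34 else (if x < 26 then 87 else 29))) else (if x < 30 then (if x < 28 then 89 else (if x < 29 then 49 else 1)) else (if x < 31 then 7 else (if x < 32 then 62 else 45)))) else (if x < 39 then (if x < 36 then (if x < 34 then 26 else (if x < 35 then 39 else 37)) else (if x < 37 then 7 else (if x < 38 then 25 else 39))) else (if x < 42 then (if x < 40 then 39 else (if x < 41 then 52 else 27)) else (if x < 43 then 65 else (if x < 44 then 38 else 66)))))) else (if x < 68 then (if x < 56 then (if x < 50 then (if x < 47 then (if x < 46 then 40 else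 32) else (if x < 48 then 31 else (if x < 49 then 51 else 35))) else (if x < 53 then (if x < 51 then 49 else (if x < 52 then 2 else 54)) else (if x < 54 then 77 else (if x < 55 then 56 else 19)))) else (if x < 62 then (if x < 59 then (if x < 57 then 7 else (if x < 58 then 31 else 25)) else (if x < 60 then 64 else (if x < 61 then 1 else 50))) else (if x < 65 then (if x < 63 then 58 else (if x < 64 then 18 else 82)) else (if x < 66 then 30 else (if x < 67 then 70 else 36))))) else (if x < 79 then (if x < 73 then (if x < 70 then (if x < 69 then 47 else 21) else (if x < 71 then 46 else (if x < 72 then 25 else 9))) else (if x < 76 then (if x < 74 then 44 else (if x < 75 then 24 else 8)) else (if x < 77 then 48 else (if x < 78 then 33 else 23)))) else (if x < 85 then (if x < 82 then (if x < 80 then 15 else (if x < 81 then 78 else 60)) else (if x < 83 then 49 else (if x < 84 then 42 else 1))) else (if x < 88 then (if x < 86 then 25 else (if x < 87 then 88 else 64)) else (if x < 89 then 3 else (if x < 90 then 80 else 31))))))) else (if x < 136 then (if x < 113 then (if x < 102 then (if x < 96 then (if x < 93 then (if x < 92 then 39 else 77) else (if x < 94 then 82 else (if x < 95 then 61 else 71))) else (if x < 99 then (if x < 97 then 69 else (if x < 98 then 53 else 43)) else (if x < 100 then 63 else (if x < 101 then 82 else 73)))) else (if x < 107 then (if x < 104 then (if x < 103 then 62 else 72) else (if x < 105 then 17 else (if x < 106 then 5 else 57))) else (if x < 110 then (if x < 108 then 14 else (if x < 109 then 31 else 82)) else (if x < 111 then 41 else (if x < 112 then 77 else 90))))) else (if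 x < 124 then (if x < 118 then (if x < 115 then (if x < 114 then 74 else 62) else (if x < 116 then 22 else (if x < 117 then 55 else 62))) else (if x < 121 then (if x < 119 then 75 else (if x < 120 then 28 else 10)) else (if x < 122 then 0 else (if x < 123 then 0 else 37)))) else (if x < 130 then (if x < 127 then (if x < 125 then 2 else (if x < 126 then 5 else 2)) else (if x < 128 then 88 else (if x < 129 then 45 else 85))) else (if x < 133 then (if x < 131 then 53 else (if x < 132 then 44 else 66)) else (if x < 134 then 59 else (if x < 135 then 45 else 79)))))) else (if x < 159 then (if x < 147 then (if x < 141 then (if x < 138 then (if x < 137 then 56 else 59) else (if x < 139 then 60 else (if x < 140 then 84 else 69))) else (if x < 144 then (if x < 142 then 24 else (if x < 143 then 38 else 21)) else (if x < 145 then 37 else (if x < 146 then 10 else 35)))) else (if x < 153 then (if x < 150 then (if x < 148 then 74 else (if x < 149 then 48 else 43)) else (if x < 151 then 63 else (if x < 152 then 58 else 67))) else (if x < 156 then (if x < 154 then 66 else (if x < 155 then 46 else 51)) else (if x < 157 then 36 else (if x < 158 then 41 else 69))))) else (if x < 170 then (if x < 164 then (if x < 161 then (if x < 160 then 26 else 26) else (if x < 162 then 40 else (if x < 163 then 60 else 48))) else (if x < 167 then (if x < 165 then 27 else (if x < 166 then 22 else 70)) else (if x < 168 then 51 else (if x < 169 then 87 else 17)))) else (if x < 176 then (if x < 173 then (if x < 171 then 12 else (if x < 172 then 37 else 24)) else (if x < 174 then 18 else (if x < 175 then 17 else 57))) else (if x < 179 then (if x < 177 then 32 else (if x < 178 then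 21 else 9)) else (if x < 180 then 73 else (if x < 181 then 66 else 87)))))))) else (if x < 273 then (if x < 227 then (if x < 204 then (if x < 193 then (if x < 187 then (if x < 184 then (if x < 183 then 6 else 68) else (if x < 185 then 42 else (if x < 186 then 88 else 28))) else (if x < 190 then (if x < 188 then 40 else (if x < 189 then 5 else 50)) else (if x < 191 then 71 else (if x < 192 then 75 else 52)))) else (if x < 198 then (if x < 195 then (if x < 194 then 75 else 29) else (if x < 196 then 20 else (if x < 197 then 84 else 53))) else (if x < 201 then (if x < 199 then 12 else (if x < 200 then 47 else 14)) else (if x < 202 then 2 else (if x < 203 then 35 else 54))))) else (if x < 215 then (if x < 209 then (if x < 206 then (if x < 205 then 81 else 51) else (if x < 207 then 19 else (if x < 208 then 68 else 89))) else (if x < 212 then (if x < 210 then 30 else (if x < 211 then 54 else 23)) else (if x < 213 then 26 else (if x < 214 then 19 else 72)))) else (if x < 221 then (if x < 218 then (if x < 216 then 67 else (if x < 217 then 89 else 28)) else (if x < 219 then 80 else (if x < 220 then 54 else 8))) else (if x < 224 then (if x < 222 then 85 else (if x < 223 then 19 else 65)) else (if x < 225 then 78 else (if x < 226 then 73 else 61)))))) else (if x < 250 then (if x < 238 then (if x < 232 then (if x < 229 then (if x < 228 then 3 else 60) else (if x < 230 then 81 else (if x < 231 then 32 else 65))) else (if x < 235 then (if x < 233 then 43 else (if x < 234 then 63 else 16)) else (if x < 236 then 43 else (if x < 237 then 63 else 24)))) else (if x < 244 then (if x < 241 then (if x < 239 then 89 else (if x < 240 then 83 else 4)) else (if x <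 242 then 30 else (if x < 243 then 12 else 0))) else (if x < 247 then (if x < 245 then 38 else (if x < 246 then 14 else 6)) else (if x < 248 then 3 else (if x < 249 then 13 else 15))))) else (if x < 261 then (if x < 255 then (if x < 252 then (if x < 251 then 6 else 72) else (if x < 253 then 34 else (if x < 254 then 65 else 33))) else (if x < 258 then (if x < 256 then 20 else (if x < 257 then 78 else 85)) else (if x < 259 then 11 else (if x < 260 then 61 else 8)))) else (if x < 267 then (if x < 264 then (if x < 262 then 55 else (if x < 263 then 58 else 46)) else (if x < 265 then 34 else (if x < 266 then 84 else 4))) else (if x < 270 then (if x < 268 then 36 else (if x < 269 then 75 else 5)) else (if x < 271 then 9 else (if x < 272 then 40 else 73))))))) else (if x < 318 then (if x < 295 then (if x < 284 then (if x < 278 then (if x < 275 then (if x < 274 then 68 else 76) else (if x < 276 then 47 else (if x < 277 then 41 else 61))) else (if x < 281 then (if x < 279 then 46 else (if x < 280 then 70 else 27)) else (if x < 282 then 48 else (if x < 283 then 28 else 13)))) else (if x < 289 then (if x < 286 then (if x < 285 then 81 else 21) else (if x < 287 then 74 else (if x < 288 then 88 else 76))) else (if x < 292 then (if x < 290 then 86 else (if x < 291 then 71 else 52)) else (if x < 293 then 57 else (if x < 294 then 50 else 17))))) else (if x < 306 then (if x < 300 then (if x < 297 then (if x < 296 then 33 else 67) else (if x < 298 then 57 else (if x < 299 then 20 else 8))) else (if x < 303 then (if x < 301 then 30 else (if x < 302 then 55 else 34)) else (if x < 304 then 80 else (if x < 305 then 47 else 79)))) else (if x < 312 then (if x < 309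 then (if x < 307 then 9 else (if x < 308 then 10 else 86)) else (if x < 310 then 18 else (if x < 311 then 53 else 59))) else (if x < 315 then (if x < 313 then 16 else (if x < 314 then 29 else 22)) else (if x < 316 then 78 else (if x < 317 then 87 else 83)))))) else (if x < 341 then (if x < 329 then (if x < 323 then (if x < 320 then (if x < 319 then 90 else 32) else (if x < 321 then 44 else (if x < 322 then 44 else 16))) else (if x < 326 then (if x < 324 then 58 else (if x < 325 then 71 else 41)) else (if x < 327 then 38 else (if x < 328 then 83 else 36)))) else (if x < 335 then (if x < 332 then (if x < 330 then 90 else (if x < 331 then 50 else 86)) else (if x < 333 then 10 else (if x < 334 then 79 else 11))) else (if x < 338 then (if x < 336 then 90 else (if x < 337 then 56 else 27)) else (if x < 339 then 23 else (if x < 340 then 42 else 55))))) else (if x < 352 then (if x < 346 then (if x < 343 then (if x < 342 then 70 else 3) else (if x < 344 then 15 else (if x < 345 then 18 else 52))) else (if x < 349 then (if x < 347 then 74 else (if x < 348 then 35 else 80)) else (if x < 350 then 69 else (if x < 351 then 4 else 33)))) else (if x < 358 then (if x < 355 then (if x < 353 then 72 else (if x < 354 then 42 else 13)) else (if x < 356 then 56 else (if x < 357 then 15 else 14))) else (if x < 361 then (if x < 359 then 23 else (if x < 360 then 45 else 22)) else (if x < 362 then 76 else (if x < 363 then 29 else 11)))))))))"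

definition ell0 :: "nat \<Rightarrow> nat" where
  "ell0 x = (if x < 182 then (if x < 91 then (if x < 45 then (if x < 22 then (if x < 11 then (if x < 5 then (if x < 2 then (if x < 1 then 0 else 102) else (if x < 3 then 116 else (if x < 4 then 64 else 104))) else (if x < 8 then (if x < 6 then 104 else (if x < 7 then 106 else 14)) else (if x < 9 then 111 else (if x < 10 then 71 else 37)))) else (if x < 16 then (if x < 13 then (if x < 12 then 51 else 70) else (if x < 14 then 92 else (if x < 15 then 25 else 70))) else (if x < 19 then (if x < 17 then 14 else (if x < 18 then 51 else 76)) else (if x < 20 then 75 else (if x < 21 then 103 else 42))))) else (if x < 33 then (if x < 27 then (if x < 24 then (if x < 23 then 107 else 5) else (if x < 25 then 91 else (if x < 26 then 119 else 106))) else (if x < 30 then (if x < 28 then 92 else (if x < 29 then 31 else 89)) else (if x < 31 then 111 else (if x < 32 then 46 else 96)))) else (if x < 39 then (if x < 36 then (if x < 34 then 32 else (if x < 35 then 42 else 2)) else (if x < 37 then 89 else (if x < 38 then 51 else 64))) else (if x < 42 then (if x < 40 then 34 else (if x < 41 then 54 else 79)) else (if x < 43 then 75 else (if x < 44 then 37 else 17)))))) else (if x < 68 then (if x < 56 then (if x < 50 then (if x < 47 then (if x < 46 then 89 else 17) else (if x < 48 then 115 else (if x < 49 then 42 else 116))) else (if x < 53 then (if x < 51 then 70 else (if x < 52 then 32 else 41)) else (if x < 54 then 102 else (if x < 55 then 107 else 46)))) else (if x < 62 then (if x < 59 then (if x < 57 then 119 else (if x < 58 then 104 else 34)) else (if x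 < 60 then 80 else (if x < 61 then 67 else 37))) else (if x < 65 then (if x < 63 then 111 else (if x < 64 then 5 else 15)) else (if x < 66 then 91 else (if x < 67 then 79 else 80))))) else (if x < 79 then (if x < 73 then (if x < 70 then (if x < 69 then 15 else 15) else (if x < 71 then 67 else (if x < 72 then 45 else 31))) else (if x < 76 then (if x < 74 then 18 else (if x < 75 then 31 else 115)) else (if x < 77 then 6 else (if x < 78 then 116 else 76)))) else (if x < 85 then (if x < 82 then (if x < 80 then 54 else (if x < 81 then 119 else 34)) else (if x < 83 then 75 else (if x < 84 then 45 else 93))) else (if x < 88 then (if x < 86 then 71 else (if x < 87 then 45 else 25)) else (if x < 89 then 76 else (if x < 90 then 80 else 91))))))) else (if x < 136 then (if x < 113 then (if x < 102 then (if x < 96 then (if x < 93 then (if x < 92 then 96 else 14) else (if x < 94 then 17 else (if x < 95 then 18 else 93))) else (if x < 99 then (if x < 97 then 46 else (if x < 98 then 79 else 54)) else (if x < 100 then 96 else (if x < 101 then 92 else 93)))) else (if x < 107 then (if x < 104 then (if x < 103 then 5 else 67) else (if x < 105 then 103 else (if x < 106 then 6 else 2))) else (if x < 110 then (if x < 108 then 18 else (if x < 109 then 25 else 64)) else (if x < 111 then 106 else (if x < 112 then 32 else 6))))) else (if x < 124 then (if x < 118 then (if x < 115 then (if x < 114 then 107 else 71) else (if x < 116 then 103 else (if x < 117 then 41 else 102))) else (if x < 121 then (if x < 119 then 2 else (if x < 120 then 115 else 41)) else (if x < 122 then 0 else (if x < 123 then 0 else 50)))) else (if x < 130 then (if x <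 127 then (if x < 125 then 3 else (if x < 126 then 29 else 24)) else (if x < 128 then 24 else (if x < 129 then 9 else 7))) else (if x < 133 then (if x < 131 then 98 else (if x < 132 then 87 else 74)) else (if x < 134 then 82 else (if x < 135 then 72 else 19)))))) else (if x < 159 then (if x < 147 then (if x < 141 then (if x < 138 then (if x < 137 then 99 else 72) else (if x < 139 then 16 else (if x < 140 then 77 else 27))) else (if x < 144 then (if x < 142 then 8 else (if x < 143 then 59 else 21)) else (if x < 145 then 81 else (if x < 146 then 63 else 52)))) else (if x < 153 then (if x < 150 then (if x < 148 then 58 else (if x < 149 then 30 else 19)) else (if x < 151 then 62 else (if x < 152 then 95 else 101))) else (if x < 156 then (if x < 154 then 22 else (if x < 155 then 12 else 4)) else (if x < 157 then 21 else (if x < 158 then 97 else 95))))) else (if x < 170 then (if x < 164 then (if x < 161 then (if x < 160 then 77 else 29) else (if x < 162 then 57 else (if x < 163 then 39 else 84))) else (if x < 167 then (if x < 165 then 55 else (if x < 166 then 74 else 66)) else (if x < 168 then 95 else (if x < 169 then 108 else 53)))) else (if x < 176 then (if x < 173 then (if x < 171 then 48 else (if x < 172 then 3 else 11)) else (if x < 174 then 110 else (if x < 175 then 117 else 40))) else (if x < 179 then (if x < 177 then 81 else (if x < 178 then 36 else 20)) else (if x < 180 then 24 else (if x < 181 then 57 else 100)))))))) else (if x < 273 then (if x < 227 then (if x < 204 then (if x < 193 then (if x < 187 then (if x < 184 then (if x < 183 then 56 else 74) else (if x < 185 then 98 else (if x < 186 then 63 else 68))) else (if x < 190 then (if x < 188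 then 61 else (if x < 189 then 1 else 100)) else (if x < 191 then 69 else (if x < 192 then 68 else 56)))) else (if x < 198 then (if x < 195 then (if x < 194 then 86 else 35) else (if x < 196 then 26 else (if x < 197 then 35 else 53))) else (if x < 201 then (if x < 199 then 85 else (if x < 200 then 10 else 90)) else (if x < 202 then 78 else (if x < 203 then 20 else 57))))) else (if x < 215 then (if x < 209 then (if x < 206 then (if x < 205 then 8 else 83) else (if x < 207 then 65 else (if x < 208 then 87 else 86))) else (if x < 212 then (if x < 210 then 43 else (if x < 211 then 27 else 100)) else (if x < 213 then 61 else (if x < 214 then 88 else 7)))) else (if x < 221 then (if x < 218 then (if x < 216 then 66 else (if x < 217 then 13 else 65)) else (if x < 219 then 36 else (if x < 220 then 1 else 39))) else (if x < 224 then (if x < 222 then 12 else (if x < 223 then 19 else 65)) else (if x < 225 then 63 else (if x < 226 then 114 else 59)))))) else (if x < 250 then (if x < 238 then (if x < 232 then (if x < 229 then (if x < 228 then 49 else 109) else (if x < 230 then 26 else (if x < 231 then 43 else 29))) else (if x < 235 then (if x < 233 then 9 else (if x < 234 then 110 else 85)) else (if x < 236 then 81 else (if x < 237 then 87 else 38)))) else (if x < 244 then (if x < 241 then (if x < 239 then 117 else (if x < 240 then 50 else 109)) else (if x < 242 then 53 else (if x < 243 then 117 else 0))) else (if x < 247 then (if x < 245 then 40 else (if x < 246 then 10 else 120)) else (if x < 248 then 44 else (if x < 249 then 44 else 30))))) else (if x < 261 then (if x < 255 then (if x < 252 then (if x < 251 then 16 else 101) else (if x < 253 then 118 else (if x <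 254 then 73 else 77))) else (if x < 258 then (if x < 256 then 11 else (if x < 257 then 112 else 43)) else (if x < 259 then 11 else (if x < 260 then 7 else 82)))) else (if x < 267 then (if x < 264 then (if x < 262 then 90 else (if x < 263 then 55 else 38)) else (if x < 265 then 48 else (if x < 266 then 28 else 23))) else (if x < 270 then (if x < 268 then 61 else (if x < 269 then 20 else 9)) else (if x < 271 then 112 else (if x < 272 then 35 else 33))))))) else (if x < 318 then (if x < 295 then (if x < 284 then (if x < 278 then (if x < 275 then (if x < 274 then 98 else 36) else (if x < 276 then 88 else (if x < 277 then 110 else 48))) else (if x < 281 then (if x < 279 then 109 else (if x < 280 then 33 else 82)) else (if x < 282 then 120 else (if x < 283 then 94 else 78)))) else (if x < 289 then (if x < 286 then (if x < 285 then 1 else 8) else (if x < 287 then 73 else (if x < 288 then 108 else 33))) else (if x < 292 then (if x < 290 then 66 else (if x < 291 then 60 else 21)) else (if x < 293 then 10 else (if x < 294 then 72 else 4))))) else (if x < 306 then (if x < 300 then (if x < 297 then (if x < 296 then 113 else 50) else (if x < 298 then 28 else (if x < 299 then 22 else 58))) else (if x < 303 then (if x < 301 then 44 else (if x < 302 then 94 else 47)) else (if x < 304 then 114 else (if x < 305 then 73 else 101)))) else (if x < 312 then (if x < 309 then (if x < 307 then 23 else (if x < 308 then 69 else 52)) else (if x < 310 then 84 else (if x < 311 then 47 else 68))) else (if x < 315 then (if x < 313 then 69 else (if x < 314 then 114 else 83)) else (if x < 316 then 62 else (if x < 317 then 13 else 62)))))) else (if x < 341 then (if x < 329 then (if x <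 323 then (if x < 320 then (if x < 319 then 60 else 49) else (if x < 321 then 3 else (if x < 322 then 27 else 39))) else (if x < 326 then (if x < 324 then 58 else (if x < 325 then 94 else 55)) else (if x < 327 then 86 else (if x < 328 then 105 else 118)))) else (if x < 335 then (if x < 332 then (if x < 330 then 83 else (if x < 331 then 99 else 90)) else (if x < 333 then 47 else (if x < 334 then 52 else 12))) else (if x < 338 then (if x < 336 then 16 else (if x < 337 then 108 else 26)) else (if x < 339 then 105 else (if x < 340 then 22 else 84))))) else (if x < 352 then (if x < 346 then (if x < 343 then (if x < 342 then 78 else 88) else (if x < 344 then 112 else (if x < 345 then 105 else 23))) else (if x < 349 then (if x < 347 then 56 else (if x < 348 then 38 else 85)) else (if x < 350 then 97 else (if x < 351 then 13 else 99)))) else (if x < 358 then (if x < 355 then (if x < 353 then 120 else (if x < 354 then 30 else 4)) else (if x < 356 then 49 else (if x < 357 then 28 else 118))) else (if x < 361 then (if x < 359 then 59 else (if x < 360 then 113 else 40)) else (if x < 362 then 97 else (if x < 363 then 60 else 113)))))))))"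

definition IJ0 :: "nat list" where
  "IJ0 = [0,28,62,22,74,77,82,14,5,72,73,63,53,71,82,39,80,64,25,42,60,15,33,8,44,25,21,36,30,18,50,64,31,19,77,2,35,31,40,38,27,39,25,37,26,62,1,89,87,85,84,7,81,79,77,67,16,86,68,4,12,10,75,55,62,90,41,31,57,17,62,82,43,69,61,77,31,3,88,1,49,78,23,48,24,9,46,47,70,82,58,1,25,7,56,54,49,51,32,66,65,52,39,7,39,45,7,49,29,34,20,49,76,59,83,64,64,6,11,1,13]"

definition ell121 :: "nat \<Rightarrow> nat" where
  "ell121 x = (if x < 182 then (if x < 91 then (if x < 45 then (if x < 22 then (if x < 11 then (if x < 5 then (if x < 2 then (if x < 1 then 0 else 61) else (if x < 3 then 1 else (if x < 4 then 62 else 2))) else (if x < 8 then (if x < 6 then 63 else (if x < 7 then 3 else 64)) else (if x < 9 then 4 else (if x < 10 then 65 else 5)))) else (if x < 16 then (if x < 13 then (if x < 12 then 66 else 6) else (if x < 14 then 67 else (if x < 15 then 7 else 68))) else (if x < 19 then (if x < 17 then 8 else (if x < 18 then 69 else 9)) else (if x < 20 then 70 else (if x < 21 then 10 else 71))))) else (if x < 33 then (if x < 27 then (if x < 24 then (if x < 23 then 11 else 72) else (if x < 25 then 12 else (if x < 26 then 73 else 13))) else (if x < 30 then (if x < 28 then 74 else (if x < 29 then 14 else 75)) else (if x < 31 then 15 else (if x < 32 then 76 else 16)))) else (if x < 39 then (if x < 36 then (if x < 34 then 77 else (if x < 35 then 17 else 78)) else (if x < 37 then 18 else (if x < 38 then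 79 else 19))) else (if x < 42 then (if x < 40 then 80 else (if x < 41 then 20 else 81)) else (if x < 43 then 21 else (if x < 44 then 82 else 22)))))) else (if x < 68 then (if x < 56 then (if x < 50 then (if x < 47 then (if x < 46 then 83 else 23) else (if x < 48 then 84 else (if x < 49 then 24 else 85))) else (if x < 53 then (if x < 51 then 25 else (if x < 52 then 86 else 26)) else (if x < 54 then 87 else (if x < 55 then 27 else 88)))) else (if x < 62 then (if x < 59 then (if x < 57 then 28 else (if x < 58 then 89 else 29)) else (if x < 60 then 90 else (if x < 61 then 30 else 91))) else (if x < 65 then (if x < 63 then 31 else (if x < 64 then 92 else 32)) else (if x < 66 then 93 else (if x < 67 then 33 else 94))))) else (if x < 79 then (if x < 73 then (if x < 70 then (if x < 69 then 34 else 95) else (if x < 71 then 35 else (if x < 72 then 96 else 36))) else (if x < 76 then (if x < 74 then 97 else (if x < 75 then 37 else 98)) else (if x < 77 then 38 else (if x < 78 then 99 else 39)))) else (if x < 85 then (if x < 82 then (if x < 80 then 100 else (if x < 81 then 40 else 101)) else (if x < 83 then 41 else (if x < 84 then 102 else 42))) else (if x < 88 then (if x < 86 then 103 else (if x < 87 then 43 else 104)) else (if x < 89 then 44 else (if x < 90 then 105 else 45))))))) else (if x < 136 then (if x < 113 then (if x < 102 then (if x < 96 then (if x < 93 then (if x < 92 then 106 else 46) else (if x < 94 then 107 else (if x < 95 then 47 else 108))) else (if x < 99 then (if x < 97 then 48 else (if x < 98 then 109 else 49)) else (if x < 100 then 110 else (if x < 101 then 50 else 111)))) else (if x < 107 then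 (if x < 104 then (if x < 103 then 51 else 112) else (if x < 105 then 52 else (if x < 106 then 113 else 53))) else (if x < 110 then (if x < 108 then 114 else (if x < 109 then 54 else 115)) else (if x < 111 then 55 else (if x < 112 then 116 else 56))))) else (if x < 124 then (if x < 118 then (if x < 115 then (if x < 114 then 117 else 57) else (if x < 116 then 118 else (if x < 117 then 58 else 119))) else (if x < 121 then (if x < 119 then 59 else (if x < 120 then 120 else 60)) else (if x < 122 then 0 else (if x < 123 then 0 else 61)))) else (if x < 130 then (if x < 127 then (if x < 125 then 1 else (if x < 126 then 62 else 2)) else (if x < 128 then 63 else (if x < 129 then 3 else 64))) else (if x < 133 then (if x < 131 then 4 else (if x < 132 then 65 else 5)) else (if x < 134 then 66 else (if x < 135 then 6 else 67)))))) else (if x < 159 then (if x < 147 then (if x < 141 then (if x < 138 then (if x < 137 then 7 else 68) else (if x < 139 then 8 else (if x < 140 then 69 else 9))) else (if x < 144 then (if x < 142 then 70 else (if x < 143 then 10 else 71)) else (if x < 145 then 11 else (if x < 146 then 72 else 12)))) else (if x < 153 then (if x < 150 then (if x < 148 then 73 else (if x < 149 then 13 else 74)) else (if x < 151 then 14 else (if x < 152 then 75 else 15))) else (if x < 156 then (if x < 154 then 76 else (if x < 155 then 16 else 77)) else (if x < 157 then 17 else (if x < 158 then 78 else 18))))) else (if x < 170 then (if x < 164 then (if x < 161 then (if x < 160 then 79 else 19) else (if x < 162 then 80 else (if x < 163 then 20 else 81))) else (if x < 167 then (if x < 165 then 21 else (if x < 166 then 82 else 22)) else (if x < 168 then 83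 else (if x < 169 then 23 else 84)))) else (if x < 176 then (if x < 173 then (if x < 171 then 24 else (if x < 172 then 85 else 25)) else (if x < 174 then 86 else (if x < 175 then 26 else 87))) else (if x < 179 then (if x < 177 then 27 else (if x < 178 then 88 else 28)) else (if x < 180 then 89 else (if x < 181 then 29 else 90)))))))) else (if x < 273 then (if x < 227 then (if x < 204 then (if x < 193 then (if x < 187 then (if x < 184 then (if x < 183 then 30 else 91) else (if x < 185 then 31 else (if x < 186 then 92 else 32))) else (if x < 190 then (if x < 188 then 93 else (if x < 189 then 33 else 94)) else (if x < 191 then 34 else (if x < 192 then 95 else 35)))) else (if x < 198 then (if x < 195 then (if x < 194 then 96 else 36) else (if x < 196 then 97 else (if x < 197 then 37 else 98))) else (if x < 201 then (if x < 199 then 38 else (if x < 200 then 99 else 39)) else (if x < 202 then 100 else (if x < 203 then 40 else 101))))) else (if x < 215 then (if x < 209 then (if x < 206 then (if x < 205 then 41 else 102) else (if x < 207 then 42 else (if x < 208 then 103 else 43))) else (if x < 212 then (if x < 210 then 104 else (if x < 211 then 44 else 105)) else (if x < 213 then 45 else (if x < 214 then 106 else 46)))) else (if x < 221 then (if x < 218 then (if x < 216 then 107 else (if x < 217 then 47 else 108)) else (if x < 219 then 48 else (if x < 220 then 109 else 49))) else (if x < 224 then (if x < 222 then 110 else (if x < 223 then 50 else 111)) else (if x < 225 then 51 else (if x < 226 then 112 else 52)))))) else (if x < 250 then (if x < 238 then (if x < 232 then (if x < 229 then (if x < 228 then 113 else 53) else (if x < 230 then 114 else (if x < 231 then 54 else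 115))) else (if x < 235 then (if x < 233 then 55 else (if x < 234 then 116 else 56)) else (if x < 236 then 117 else (if x < 237 then 57 else 118)))) else (if x < 244 then (if x < 241 then (if x < 239 then 58 else (if x < 240 then 119 else 59)) else (if x < 242 then 120 else (if x < 243 then 60 else 0))) else (if x < 247 then (if x < 245 then 61 else (if x < 246 then 1 else 62)) else (if x < 248 then 2 else (if x < 249 then 63 else 3))))) else (if x < 261 then (if x < 255 then (if x < 252 then (if x < 251 then 64 else 4) else (if x < 253 then 65 else (if x < 254 then 5 else 66))) else (if x < 258 then (if x < 256 then 6 else (if x < 257 then 67 else 7)) else (if x < 259 then 68 else (if x < 260 then 8 else 69)))) else (if x < 267 then (if x < 264 then (if x < 262 then 9 else (if x < 263 then 70 else 10)) else (if x < 265 then 71 else (if x < 266 then 11 else 72))) else (if x < 270 then (if x < 268 then 12 else (if x < 269 then 73 else 13)) else (if x < 271 then 74 else (if x < 272 then 14 else 75))))))) else (if x < 318 then (if x < 295 then (if x < 284 then (if x < 278 then (if x < 275 then (if x < 274 then 15 else 76) else (if x < 276 then 16 else (if x < 277 then 77 else 17))) else (if x < 281 then (if x < 279 then 78 else (if x < 280 then 18 else 79)) else (if x < 282 then 19 else (if x < 283 then 80 else 20)))) else (if x < 289 then (if x < 286 then (if x < 285 then 81 else 21) else (if x < 287 then 82 else (if x < 288 then 22 else 83))) else (if x < 292 then (if x < 290 then 23 else (if x < 291 then 84 else 24)) else (if x < 293 then 85 else (if x < 294 then 25 else 86))))) else (if x < 306 then (if x < 300 then (if x < 297 then (if x < 296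 then 26 else 87) else (if x < 298 then 27 else (if x < 299 then 88 else 28))) else (if x < 303 then (if x < 301 then 89 else (if x < 302 then 29 else 90)) else (if x < 304 then 30 else (if x < 305 then 91 else 31)))) else (if x < 312 then (if x < 309 then (if x < 307 then 92 else (if x < 308 then 32 else 93)) else (if x < 310 then 33 else (if x < 311 then 94 else 34))) else (if x < 315 then (if x < 313 then 95 else (if x < 314 then 35 else 96)) else (if x < 316 then 36 else (if x < 317 then 97 else 37)))))) else (if x < 341 then (if x < 329 then (if x < 323 then (if x < 320 then (if x < 319 then 98 else 38) else (if x < 321 then 99 else (if x < 322 then 39 else 100))) else (if x < 326 then (if x < 324 then 40 else (if x < 325 then 101 else 41)) else (if x < 327 then 102 else (if x < 328 then 42 else 103)))) else (if x < 335 then (if x < 332 then (if x < 330 then 43 else (if x < 331 then 104 else 44)) else (if x < 333 then 105 else (if x < 334 then 45 else 106))) else (if x < 338 then (if x < 336 then 46 else (if x < 337 then 107 else 47)) else (if x < 339 then 108 else (if x < 340 then 48 else 109))))) else (if x < 352 then (if x < 346 then (if x < 343 then (if x < 342 then 49 else 110) else (if x < 344 then 50 else (if x < 345 then 111 else 51))) else (if x < 349 then (if x < 347 then 112 else (if x < 348 then 52 else 113)) else (if x < 350 then 53 else (if x < 351 then 114 else 54)))) else (if x < 358 then (if x < 355 then (if x < 353 then 115 else (if x < 354 then 55 else 116)) else (if x < 356 then 56 else (if x < 357 then 117 else 57))) else (if x < 361 then (if x < 359 then 118 else (if x < 360 then 58 else 119)) else (if x < 362 then 59 else (if x < 363 then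 120 else 60)))))))))"

definition IJ121 :: "nat list" where
  "IJ121 = [0,0,0,0,0,0,0,0,0,0,0,0,0,0,0,0,0,0,0,0,0,0,0,0,0,0,0,0,0,0,0,0,0,0,0,0,0,0,0,0,0,0,0,0,0,0,0,0,0,0,0,0,0,0,0,0,0,0,0,0,0,0,0,0,0,0,0,0,0,0,0,0,0,0,0,0,0,0,0,0,0,0,0,0,0,0,0,0,0,0,0,0,0,0,0,0,0,0,0,0,0,0,0,0,0,0,0,0,0,0,0,0,0,0,0,0,0,0,0,0,0]"

definition ell122 :: "nat \<Rightarrow> nat" where
  "ell122 x = (if x < 182 then (if x < 91 then (if x < 45 then (if x < 22 then (if x < 11 then (if x < 5 then (if x < 2 then (if x < 1 then 0 else 57) else (if x < 3 then 61 else (if x < 4 then 50 else 42))) else (if x < 8 then (if x < 6 then 59 else (if x < 7 then 62 else 30)) else (if x < 9 then 32 else (if x < 10 then 29 else 9)))) else (if x < 16 then (if x < 13 then (if x < 12 then 75 else 5) else (if x < 14 then 110 else (if x < 15 then 20 else 56))) else (if x < 19 then (if x < 17 then 93 else (if x < 18 then 7 else 65)) else (if x < 20 then 12 else (if x < 21 then 115 else 90))))) else (if x < 33 then (if x < 27 then (if x < 24 then (if x < 23 then 99 else 111) else (if x < 25 then 96 else (if x < 26 then 109 else 118))) else (if x < 30 then (if x < 28 then 87 else (if x < 29 then 1 else 82)) else (if x < 31 then 27 else (if x < 32 then 16 else 63)))) else (if x < 39 then (if x < 36 then (if x < 34 then 104 else (if x < 35 then 116 else 43)) else (if x < 37 then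 15 else (if x < 38 then 23 else 105))) else (if x < 42 then (if x < 40 then 88 else (if x < 41 then 114 else 101)) else (if x < 43 then 60 else (if x < 44 then 51 else 25)))))) else (if x < 68 then (if x < 56 then (if x < 50 then (if x < 47 then (if x < 46 then 47 else 83) else (if x < 48 then 119 else (if x < 49 then 37 else 120))) else (if x < 53 then (if x < 51 then 108 else (if x < 52 then 21 else 95)) else (if x < 54 then 35 else (if x < 55 then 74 else 89)))) else (if x < 62 then (if x < 59 then (if x < 57 then 80 else (if x < 58 then 36 else 52)) else (if x < 60 then 67 else (if x < 61 then 103 else 26))) else (if x < 65 then (if x < 63 then 78 else (if x < 64 then 28 else 76)) else (if x < 66 then 113 else (if x < 67 then 55 else 54))))) else (if x < 79 then (if x < 73 then (if x < 70 then (if x < 69 then 84 else 91) else (if x < 71 then 39 else (if x < 72 then 107 else 46))) else (if x < 76 then (if x < 74 then 24 else (if x < 75 then 97 else 85)) else (if x < 77 then 71 else (if x < 78 then 44 else 112)))) else (if x < 85 then (if x < 82 then (if x < 80 then 34 else (if x < 81 then 41 else 19)) else (if x < 83 then 14 else (if x < 84 then 10 else 3))) else (if x < 88 then (if x < 86 then 77 else (if x < 87 then 31 else 4)) else (if x < 89 then 33 else (if x < 90 then 117 else 81))))))) else (if x < 136 then (if x < 113 then (if x < 102 then (if x < 96 then (if x < 93 then (if x < 92 then 86 else 79) else (if x < 94 then 48 else (if x < 95 then 38 else 17))) else (if x < 99 then (if x < 97 then 68 else (if x < 98 then 40 else 72)) else (if x < 100 then 70 else (if x < 101 then 98 else 49))))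 else (if x < 107 then (if x < 104 then (if x < 103 then 106 else 18) else (if x < 105 then 13 else (if x < 106 then 8 else 64))) else (if x < 110 then (if x < 108 then 92 else (if x < 109 then 45 else 66)) else (if x < 111 then 11 else (if x < 112 then 69 else 53))))) else (if x < 124 then (if x < 118 then (if x < 115 then (if x < 114 then 94 else 73) else (if x < 116 then 6 else (if x < 117 then 102 else 22))) else (if x < 121 then (if x < 119 then 58 else (if x < 120 then 2 else 100)) else (if x < 122 then 0 else (if x < 123 then 0 else 22)))) else (if x < 130 then (if x < 127 then (if x < 125 then 120 else (if x < 126 then 66 else 59)) else (if x < 128 then 36 else (if x < 129 then 118 else 79))) else (if x < 133 then (if x < 131 then 78 else (if x < 132 then 77 else 26)) else (if x < 134 then 23 else (if x < 135 then 56 else 98)))))) else (if x < 159 then (if x < 147 then (if x < 141 then (if x < 138 then (if x < 137 then 45 else 108) else (if x < 139 then 79 else (if x < 140 then 23 else 112))) else (if x < 144 then (if x < 142 then 14 else (if x < 143 then 13 else 116)) else (if x < 145 then 74 else (if x < 146 then 28 else 113)))) else (if x < 153 then (if x < 150 then (if x < 148 then 80 else (if x < 149 then 62 else 110)) else (if x < 151 then 97 else (if x < 152 then 15 else 78))) else (if x < 156 then (if x < 154 then 89 else (if x < 155 then 70 else 69)) else (if x < 157 then 37 else (if x < 158 then 58 else 47))))) else (if x < 170 then (if x < 164 then (if x < 161 then (if x < 160 then 75 else 50) else (if x < 162 then 52 else (if x < 163 then 72 else 55))) else (if x < 167 then (if x < 165 then 14 else (if x < 166 then 9 else 83)) else (if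 x < 168 then 82 else (if x < 169 then 25 else 2)))) else (if x < 176 then (if x < 173 then (if x < 171 then 116 else (if x < 172 then 44 else 56)) else (if x < 174 then 69 else (if x < 175 then 102 else 22))) else (if x < 179 then (if x < 177 then 94 else (if x < 178 then 16 else 109)) else (if x < 180 then 42 else (if x < 181 then 19 else 54)))))))) else (if x < 273 then (if x < 227 then (if x < 204 then (if x < 193 then (if x < 187 then (if x < 184 then (if x < 183 then 39 else 51) else (if x < 185 then 27 else (if x < 186 then 106 else 91))) else (if x < 190 then (if x < 188 then 96 else (if x < 189 then 101 else 117)) else (if x < 191 then 91 else (if x < 192 then 84 else 18)))) else (if x < 198 then (if x < 195 then (if x < 194 then 10 else 97) else (if x < 196 then 38 else (if x < 197 then 1 else 119))) else (if x < 201 then (if x < 199 then 53 else (if x < 200 then 120 else 65)) else (if x < 202 then 72 else (if x < 203 then 80 else 88))))) else (if x < 215 then (if x < 209 then (if x < 206 then (if x < 205 then 60 else 107) else (if x < 207 then 49 else (if x < 208 then 73 else 107))) else (if x < 212 then (if x < 210 then 45 else (if x < 211 then 65 else 67)) else (if x < 213 then 113 else (if x < 214 then 70 else 93)))) else (if x < 221 then (if x < 218 then (if x < 216 then 25 else (if x < 217 then 24 else 3)) else (if x < 219 then 89 else (if x < 220 then 55 else 34))) else (if x < 224 then (if x < 222 then 86 else (if x < 223 then 87 else 17)) else (if x < 225 then 111 else (if x < 226 then 39 else 6)))))) else (if x < 250 then (if x < 238 then (if x < 232 then (if x < 229 then (if x < 228 then 53 else 58) else (if x < 230 then 24 else (if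 x < 231 then 20 else 105))) else (if x < 235 then (if x < 233 then 62 else (if x < 234 then 104 else 8)) else (if x < 236 then 99 else (if x < 237 then 29 else 13)))) else (if x < 244 then (if x < 241 then (if x < 239 then 100 else (if x < 240 then 35 else 43)) else (if x < 242 then 85 else (if x < 243 then 95 else 0))) else (if x < 247 then (if x < 245 then 35 else (if x < 246 then 44 else 105)) else (if x < 248 then 36 else (if x < 249 then 42 else 11))))) else (if x < 261 then (if x < 255 then (if x < 252 then (if x < 251 then 93 else 27) else (if x < 253 then 73 else (if x < 254 then 51 else 7))) else (if x < 258 then (if x < 256 then 108 else (if x < 257 then 87 else 4)) else (if x < 259 then 5 else (if x < 260 then 30 else 75)))) else (if x < 267 then (if x < 264 then (if x < 262 then 33 else (if x < 263 then 60 else 6)) else (if x < 265 then 37 else (if x < 266 then 94 else 106))) else (if x < 270 then (if x < 268 then 81 else (if x < 269 then 41 else 11)) else (if x < 271 then 98 else (if x < 272 then 46 else 47))))))) else (if x < 318 then (if x < 295 then (if x < 284 then (if x < 278 then (if x < 275 then (if x < 274 then 32 else 68) else (if x < 276 then 86 else (if x < 277 then 21 else 90))) else (if x < 281 then (if x < 279 then 64 else (if x < 280 then 82 else 7)) else (if x < 282 then 66 else (if x < 283 then 19 else 34)))) else (if x < 289 then (if x < 286 then (if x < 285 then 40 else 12) else (if x < 287 then 26 else (if x < 288 then 48 else 15))) else (if x < 292 then (if x < 290 then 48 else (if x < 291 then 85 else 90)) else (if x < 293 then 61 else (if x < 294 then 5 else 104))))) else (if x < 306 then (if x < 300 then (if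 x < 297 then (if x < 296 then 100 else 57) else (if x < 298 then 99 else (if x < 299 then 68 else 41))) else (if x < 303 then (if x < 301 then 59 else (if x < 302 then 88 else 117)) else (if x < 304 then 18 else (if x < 305 then 9 else 32)))) else (if x < 312 then (if x < 309 then (if x < 307 then 111 else (if x < 308 then 84 else 81)) else (if x < 310 then 40 else (if x < 311 then 67 else 76))) else (if x < 315 then (if x < 313 then 76 else (if x < 314 then 103 else 31)) else (if x < 316 then 1 else (if x < 317 then 92 else 46)))))) else (if x < 341 then (if x < 329 then (if x < 323 then (if x < 320 then (if x < 319 then 2 else 8) else (if x < 321 then 61 else (if x < 322 then 33 else 114))) else (if x < 326 then (if x < 324 then 109 else (if x < 325 then 52 else 12)) else (if x < 327 then 31 else (if x < 328 then 17 else 29)))) else (if x < 335 then (if x < 332 then (if x < 330 then 10 else (if x < 331 then 20 else 112)) else (if x < 333 then 54 else (if x < 334 then 96 else 63))) else (if x < 338 then (if x < 336 then 30 else (if x < 337 then 83 else 92)) else (if x < 339 then 49 else (if x < 340 then 16 else 101))))) else (if x < 352 then (if x < 346 then (if x < 343 then (if x < 342 then 114 else 63) else (if x < 344 then 110 else (if x < 345 then 3 else 28))) else (if x < 349 then (if x < 347 then 103 else (if x < 348 then 115 else 71)) else (if x < 350 then 43 else (if x < 351 then 38 else 4)))) else (if x < 358 then (if x < 355 then (if x < 353 then 50 else (if x < 354 then 118 else 21)) else (if x < 356 then 71 else (if x < 357 then 74 else 77))) else (if x < 361 then (if x < 359 then 115 else (if x < 360 then 95 else 57)) else (if x < 362 then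 64 else (if x < 363 then 119 else 102)))))))))"

definition IJ122 :: "nat list" where
  "IJ122 = [0,29,22,23,15,13,72,4,80,74,18,3,55,23,56,11,10,50,36,38,71,16,44,90,87,22,16,53,86,9,47,34,30,20,67,17,57,71,76,74,81,28,27,46,41,76,73,9,75,4,34,58,8,11,78,33,34,6,13,6,38,12,4,89,63,16,43,32,60,61,78,19,8,80,89,72,26,54,89,19,81,35,14,12,84,29,52,71,5,28,42,6,66,9,32,17,24,12,87,70,27,60,26,69,36,46,67,63,48,35,37,38,69,60,56,45,66,53,45,2,2]"

definition ell123 :: "nat \<Rightarrow> nat" where
  "ell123 x = (if x < 182 then (if x < 91 then (if x < 45 then (if x < 22 then (if x < 11 then (if x < 5 then (if x < 2 then (if x < 1 then 50 else 61) else (if x < 3 then 114 else (if x < 4 then 115 else 99))) else (if x < 8 then (if x < 6 then 113 else (if x < 7 then 116 else 102)) else (if x < 9 then 1 else (if x < 10 then 25 else 54)))) else (if x < 16 then (if x < 13 then (if x < 12 then 55 else 36) else (if x < 14 then 96 else (if x < 15 then 106 else 94))) else (if x < 19 then (if x < 17 then 105 else (if x < 18 then 118 else 47)) else (if x < 20 then 63 else (if x < 21 then 33 else 15))))) else (if x < 33 then (if x < 27 then (if x < 24 then (if x < 23 then 2 else 84) else (if x < 25 then 90 else (if x < 26 then 74 else 35))) else (if x < 30 then (if x < 28 then 18 else (if x < 29 then 40 else 20)) else (if x < 31 then 31 else (if x < 32 then 43 else 68)))) else (if x < 39 then (if x < 36 then (if x < 34 then 56 else (if x < 35 then 107 else 0))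 else (if x < 37 then 101 else (if x < 38 then 45 else 3))) else (if x < 42 then (if x < 40 then 42 else (if x < 41 then 75 else 17)) else (if x < 43 then 79 else (if x < 44 then 39 else 49)))))) else (if x < 68 then (if x < 56 then (if x < 50 then (if x < 47 then (if x < 46 then 93 else 72) else (if x < 48 then 16 else (if x < 49 then 86 else 111))) else (if x < 53 then (if x < 51 then 87 else (if x < 52 then 51 else 19)) else (if x < 54 then 34 else (if x < 55 then 95 else 67)))) else (if x < 62 then (if x < 59 then (if x < 57 then 112 else (if x < 58 then 29 else 98)) else (if x < 60 then 32 else (if x < 61 then 10 else 44))) else (if x < 65 then (if x < 63 then 24 else (if x < 64 then 71 else 5)) else (if x < 66 then 117 else (if x < 67 then 91 else 9))))) else (if x < 79 then (if x < 73 then (if x < 70 then (if x < 69 then 62 else 14) else (if x < 71 then 27 else (if x < 72 then 85 else 108))) else (if x < 76 then (if x < 74 then 100 else (if x < 75 then 58 else 30)) else (if x < 77 then 104 else (if x < 78 then 73 else 26)))) else (if x < 85 then (if x < 82 then (if x < 80 then 53 else (if x < 81 then 48 else 64)) else (if x < 83 then 119 else (if x < 84 then 38 else 41))) else (if x < 88 then (if x < 86 then 59 else (if x < 87 then 76 else 80)) else (if x < 89 then 92 else (if x < 90 then 109 else 12))))))) else (if x < 136 then (if x < 113 then (if x < 102 then (if x < 96 then (if x < 93 then (if x < 92 then 7 else 23) else (if x < 94 then 81 else (if x < 95 then 82 else 6))) else (if x < 99 then (if x < 97 then 57 else (if x < 98 then 46 else 110)) else (if x < 100 then 52 else (if x <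 101 then 78 else 11)))) else (if x < 107 then (if x < 104 then (if x < 103 then 89 else 120) else (if x < 105 then 21 else (if x < 106 then 69 else 60))) else (if x < 110 then (if x < 108 then 65 else (if x < 109 then 97 else 13)) else (if x < 111 then 66 else (if x < 112 then 77 else 8))))) else (if x < 124 then (if x < 118 then (if x < 115 then (if x < 114 then 83 else 37) else (if x < 116 then 4 else (if x < 117 then 88 else 22))) else (if x < 121 then (if x < 119 then 103 else (if x < 120 then 28 else 70)) else (if x < 122 then 61 else (if x < 123 then 22 else 0)))) else (if x < 130 then (if x < 127 then (if x < 125 then 103 else (if x < 126 then 87 else 66)) else (if x < 128 then 116 else (if x < 129 then 98 else 18))) else (if x < 133 then (if x < 131 then 81 else (if x < 132 then 71 else 76)) else (if x < 134 then 24 else (if x < 135 then 3 else 105)))))) else (if x < 159 then (if x < 147 then (if x < 141 then (if x < 138 then (if x < 137 then 11 else 13) else (if x < 139 then 51 else (if x < 140 then 81 else 3))) else (if x < 144 then (if x < 142 then 53 else (if x < 143 then 38 else 69)) else (if x < 145 then 0 else (if x < 146 then 67 else 5)))) else (if x < 153 then (if x < 150 then (if x < 148 then 91 else (if x < 149 then 29 else 102)) else (if x < 151 then 106 else (if x < 152 then 30 else 45))) else (if x < 156 then (if x < 154 then 71 else (if x < 155 then 112 else 78)) else (if x < 157 then 8 else (if x < 158 then 111 else 28))))) else (if x < 170 then (if x < 164 then (if x < 161 then (if x < 160 then 72 else 36) else (if x < 162 then 99 else (if x < 163 then 32 else 52))) else (if x < 167 then (if x < 165 then 9 else (if x < 166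 then 38 else 55)) else (if x < 168 then 16 else (if x < 169 then 31 else 93)))) else (if x < 176 then (if x < 173 then (if x < 171 then 70 else (if x < 172 then 0 else 26)) else (if x < 174 then 105 else (if x < 175 then 8 else 22))) else (if x < 179 then (if x < 177 then 103 else (if x < 178 then 37 else 68)) else (if x < 180 then 35 else (if x < 181 then 113 else 119)))))))) else (if x < 273 then (if x < 227 then (if x < 204 then (if x < 193 then (if x < 187 then (if x < 184 then (if x < 183 then 62 else 85) else (if x < 185 then 49 else (if x < 186 then 43 else 120))) else (if x < 190 then (if x < 188 then 27 else (if x < 189 then 74 else 79)) else (if x < 191 then 12 else (if x < 192 then 27 else 14)))) else (if x < 198 then (if x < 195 then (if x < 194 then 21 else 41) else (if x < 196 then 30 else (if x < 197 then 6 else 20))) else (if x < 201 then (if x < 199 then 86 else (if x < 200 then 83 else 87)) else (if x < 202 then 63 else (if x < 203 then 52 else 29))))) else (if x < 215 then (if x < 209 then (if x < 206 then (if x < 205 then 75 else 39) else (if x < 207 then 108 else (if x < 208 then 89 else 4))) else (if x < 212 then (if x < 210 then 108 else (if x < 211 then 13 else 63)) else (if x < 213 then 10 else (if x < 214 then 91 else 78)))) else (if x < 221 then (if x < 218 then (if x < 216 then 118 else (if x < 217 then 93 else 58)) else (if x < 219 then 59 else (if x < 220 then 112 else 9))) else (if x < 224 then (if x < 222 then 48 else (if x < 223 then 23 else 40)) else (if x < 225 then 57 else (if x < 226 then 90 else 85)))))) else (if x < 250 then (if x < 238 then (if x < 232 then (if x < 229 then (if x < 228 then 88 else 83) else (if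 x < 230 then 28 else (if x < 231 then 58 else 94))) else (if x < 235 then (if x < 233 then 42 else (if x < 234 then 102 else 107)) else (if x < 236 then 60 else (if x < 237 then 84 else 54)))) else (if x < 244 then (if x < 241 then (if x < 239 then 69 else (if x < 240 then 50 else 95)) else (if x < 242 then 101 else (if x < 243 then 104 else 34))) else (if x < 247 then (if x < 245 then 61 else (if x < 246 then 95 else 26)) else (if x < 248 then 42 else (if x < 249 then 98 else 113))))) else (if x < 261 then (if x < 255 then (if x < 252 then (if x < 251 then 77 else 118) else (if x < 253 then 43 else (if x < 254 then 4 else 49))) else (if x < 258 then (if x < 256 then 47 else (if x < 257 then 51 else 40)) else (if x < 259 then 92 else (if x < 260 then 96 else 1)))) else (if x < 267 then (if x < 264 then (if x < 262 then 36 else (if x < 263 then 109 else 39)) else (if x < 265 then 88 else (if x < 266 then 111 else 37))) else (if x < 270 then (if x < 268 then 120 else (if x < 269 then 7 else 64)) else (if x < 271 then 77 else (if x < 272 then 11 else 100))))))) else (if x < 318 then (if x < 295 then (if x < 284 then (if x < 278 then (if x < 275 then (if x < 274 then 72 else 25) else (if x < 276 then 46 else (if x < 277 then 23 else 19))) else (if x < 281 then (if x < 279 then 2 else (if x < 280 then 65 else 31)) else (if x < 282 then 47 else (if x < 283 then 66 else 119)))) else (if x < 289 then (if x < 286 then (if x < 285 then 48 else 110) else (if x < 287 then 33 else (if x < 288 then 24 else 82))) else (if x < 292 then (if x < 290 then 45 else (if x < 291 then 82 else 104)) else (if x < 293 then 2 else (if x < 294 then 115 else 96))))) else (if x < 306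 then (if x < 300 then (if x < 297 then (if x < 296 then 107 else 50) else (if x < 298 then 114 else (if x < 299 then 84 else 46))) else (if x < 303 then (if x < 301 then 64 else (if x < 302 then 116 else 75)) else (if x < 304 then 12 else (if x < 305 then 21 else 55)))) else (if x < 312 then (if x < 309 then (if x < 307 then 25 else (if x < 308 then 90 else 14)) else (if x < 310 then 7 else (if x < 311 then 110 else 10))) else (if x < 315 then (if x < 313 then 117 else (if x < 314 then 117 else 44)) else (if x < 316 then 80 else (if x < 317 then 20 else 97)))))) else (if x < 341 then (if x < 329 then (if x < 323 then (if x < 320 then (if x < 319 then 100 else 70) else (if x < 321 then 60 else (if x < 322 then 115 else 109))) else (if x < 326 then (if x < 324 then 17 else (if x < 325 then 35 else 32)) else (if x < 327 then 33 else (if x < 328 then 80 else 57)))) else (if x < 335 then (if x < 332 then (if x < 330 then 54 else (if x < 331 then 41 else 94)) else (if x < 333 then 53 else (if x < 334 then 62 else 74))) else (if x < 338 then (if x < 336 then 56 else (if x < 337 then 1 else 16)) else (if x < 339 then 97 else (if x < 340 then 89 else 68))))) else (if x < 352 then (if x < 346 then (if x < 343 then (if x < 342 then 79 else 17) else (if x < 344 then 56 else (if x < 345 then 106 else 59))) else (if x < 349 then (if x < 347 then 5 else (if x < 348 then 44 else 15)) else (if x < 350 then 73 else (if x < 351 then 101 else 6)))) else (if x < 358 then (if x < 355 then (if x < 353 then 92 else (if x < 354 then 99 else 18)) else (if x < 356 then 19 else (if x < 357 then 73 else 67))) else (if x < 361 then (if x < 359 then 76 else (if x < 360 then 15 else 34))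 else (if x < 362 then 114 else (if x < 363 then 65 else 86)))))))))"

definition IJ123 :: "nat list" where
  "IJ123 = [37,11,76,45,14,56,42,33,69,35,52,15,70,42,27,90,79,86,90,83,41,58,44,32,83,78,29,59,18,10,79,80,55,8,57,33,50,52,86,88,21,13,48,70,61,47,68,40,5,36,84,46,55,61,85,20,65,72,15,3,14,0,30,83,24,43,63,65,81,3,73,65,85,54,28,67,19,23,30,68,51,54,2,47,53,20,75,75,50,40,88,68,87,73,21,57,18,37,17,51,22,48,40,26,41,51,66,58,43,74,10,21,24,84,59,79,59,44,85,88,5]"


definition pvl :: "nat \<Rightarrow> nat list" where
  "pvl c = (if c < 121 then PW c else if c = 121 then [0,0,0,0,0,1] else addl (PW (c - 122)) [0,0,0,0,0,1])"

definition zechq :: "nat list \<Rightarrow> bool" where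
  "zechq q = (let A = pvl (q!0); B = pvl (q!1) in
     (addl A B = pvl (q!2) \<or> addl A B = negl (pvl (q!2))) \<and>
     (addl A (negl B) = pvl (q!3) \<or> addl A (negl B) = negl (pvl (q!3))))"

fun allbelow :: "(nat \<Rightarrow> bool) \<Rightarrow> nat \<Rightarrow> bool" where
  "allbelow P 0 = True" | "allbelow P (Suc n) = (P n \<and> allbelow P n)"

lemma allbelow_num: "allbelow P (numeral k) = (P (pred_numeral k) \<and> allbelow P (pred_numeral k))"
  by (simp add: numeral_eq_Suc)

lemma allbelow_1: "allbelow P 1 = P 0" by simp

lemma allbelow_iff: "allbelow P n \<longleftrightarrow> (\<forall>i<n. P i)"
  by (induction n) (auto simp: less_Suc_eq)

lemma zech_chk: "allbelow (\<lambda>i. zechq (LN i)) 91"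
  by (simp add: allbelow_num allbelow_1 LN_def zechq_def pvl_def PW_1 PW_2 PW_3 PW_4 PW_5 PW_6 PW_7 PW_8 PW_9 PW_10 PW_11 PW_12 PW_13 PW_14 PW_15 PW_16 PW_17 PW_18 PW_19 PW_20 PW_21 PW_22 PW_23 PW_24 PW_25 PW_26 PW_27 PW_28 PW_29 PW_30 PW_31 PW_32 PW_33 PW_34 PW_35 PW_36 PW_37 PW_38 PW_39 PW_40 PW_41 PW_42 PW_43 PW_44 PW_45 PW_46 PW_47 PW_48 PW_49 PW_50 PW_51 PW_52 PW_53 PW_54 PW_55 PW_56 PW_57 PW_58 PW_59 PW_60 PW_61 PW_62 PW_63 PW_64 PW_65 PW_66 PW_67 PW_68 PW_69 PW_70 PW_71 PW_72 PW_73 PW_74 PW_75 PW_76 PW_77 PW_78 PW_79 PW_80 PW_81 PW_82 PW_83 PW_84 PW_85 PW_86 PW_87 PW_88 PW_89 PW_90 PW_91 PW_92 PW_93 PW_94 PW_95 PW_96 PW_97 PW_98 PW_99 PW_100 PW_101 PW_102 PW_103 PW_104 PW_105 PW_106 PW_107 PW_108 PW_109 PW_110 PW_111 PW_112 PW_113 PW_114 PW_115 PW_116 PW_117 PW_118 PW_119 PW_120 PW_121 PW_122 PW_123 PW_124 PW_125 PW_126 PW_127 PW_128 PW_129 PW_130 PW_131 PW_132 PW_133 PW_134 PW_135 PW_136 PW_137 PW_138 PW_139 PW_140 PW_141 PW_142 PW_143 PW_144 PW_145 PW_146 PW_147 PW_148 PW_149 PW_150 PW_151 PW_152 PW_153 PW_154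 PW_155 PW_156 PW_157 PW_158 PW_159 PW_160 PW_161 PW_162 PW_163 PW_164 PW_165 PW_166 PW_167 PW_168 PW_169 PW_170 PW_171 PW_172 PW_173 PW_174 PW_175 PW_176 PW_177 PW_178 PW_179 PW_180 PW_181 PW_182 PW_183 PW_184 PW_185 PW_186 PW_187 PW_188 PW_189 PW_190 PW_191 PW_192 PW_193 PW_194 PW_195 PW_196 PW_197 PW_198 PW_199 PW_200 PW_201 PW_202 PW_203 PW_204 PW_205 PW_206 PW_207 PW_208 PW_209 PW_210 PW_211 PW_212 PW_213 PW_214 PW_215 PW_216 PW_217 PW_218 PW_219 PW_220 PW_221 PW_222 PW_223 PW_224 PW_225 PW_226 PW_227 PW_228 PW_229 PW_230 PW_231 PW_232 PW_233 PW_234 PW_235 PW_236 PW_237 PW_238 PW_239 PW_240 PW_241 PW_242 addl_def negl_def Let_def gc_def)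


fun chkP :: "nat \<Rightarrow> nat list \<Rightarrow> bool" where
  "chkP i [] = True" | "chkP i (x # xs) = (x < 364 \<and> lo x = i \<and> chkP i xs)"

definition partq :: "nat \<Rightarrow> bool" where
  "partq i = (length (LN i) = 4 \<and> distinct (LN i) \<and> chkP i (LN i))"

lemma part_chk: "allbelow partq 91"
  by (simp add: allbelow_num allbelow_1 LN_def partq_def lo_def)

fun chkQ :: "nat \<Rightarrow> (nat \<Rightarrow> nat) \<Rightarrow> nat \<Rightarrow> nat list \<Rightarrow> bool" where
  "chkQ r f j [] = True" | "chkQ r f j (y # ys) = ((y = r \<or> f y = j) \<and> chkQ r f j ys)"

fun chkR :: "nat \<Rightarrow> (nat \<Rightarrow> nat) \<Rightarrow> nat \<Rightarrow> nat list \<Rightarrow> bool" where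
  "chkR r f j [] = True"
| "chkR r f j (i # is) = (i < 91 \<and> r \<in> set (map (shj j) (LN i)) \<and>
      chkQ r f j (map (shj j) (LN i)) \<and> chkR r f (Suc j) is)"

lemma rep0_chk: "chkR 0 ell0 0 IJ0"
  by (simp add: IJ0_def LN_def ell0_def shj_def)

lemma rep121_chk: "chkR 121 ell121 0 IJ121"
  by (simp add: IJ121_def LN_def ell121_def shj_def)

lemma rep122_chk: "chkR 122 ell122 0 IJ122"
  by (simp add: IJ122_def LN_def ell122_def shj_def)

lemma rep123_chk: "chkR 123 ell123 0 IJ123"
  by (simp add: IJ123_def LN_def ell123_def shj_def)

lemma IJ_len: "length IJ0 = 121" "length IJ121 = 121" "length IJ122 = 121" "length IJ123 = 121"
  by (simp_all add: IJ0_def IJ121_def IJ122_def IJ123_def)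


definition Pset :: "nat \<Rightarrow> nat set" where "Pset i = set (LN i)"
definition LS :: "nat \<Rightarrow> nat \<Rightarrow> nat set" where "LS j i = shj j ` Pset i"

lemma chkP_iff: "chkP i xs \<longleftrightarrow> (\<forall>x\<in>set xs. x < 364 \<and> lo x = i)"
  by (induction xs) auto

lemma part_facts: "i < 91 \<Longrightarrow> length (LN i) = 4 \<and> distinct (LN i) \<and> (\<forall>x\<in>Pset i. x < 364 \<and> lo x = i)"
  using part_chk unfolding allbelow_iff partq_def Pset_def chkP_iff by blast

lemma Pset_card: "i < 91 \<Longrightarrow> card (Pset i) = 4"
  using part_facts[of i] unfolding Pset_def by (simp add: distinct_card)

lemma Pset_lt: "i < 91 \<Longrightarrow> x \<in> Pset i \<Longrightarrow> x < 364"
  using part_facts by blast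

lemma Pset_disj: "i < 91 \<Longrightarrow> i' < 91 \<Longrightarrow> x \<in> Pset i \<Longrightarrow> x \<in> Pset i' \<Longrightarrow> i = i'"
  using part_facts by metis

lemma Pset_cover: "c < 364 \<Longrightarrow> \<exists>i<91. c \<in> Pset i"
proof -
  assume c: "c < 364"
  have "card (\<Union>i\<in>{..<91}. Pset i) = (\<Sum>i\<in>{..<91}. card (Pset i))"
  proof (rule card_UN_disjoint)
    show "finite {..<91::nat}" by simp
    show "\<forall>i\<in>{..<91}. finite (Pset i)" unfolding Pset_def by simp
    show "\<forall>i\<in>{..<91}. \<forall>j\<in>{..<91}. i \<noteq> j \<longrightarrow> Pset i \<inter> Pset j = {}"
      using Pset_disj by blast
  qed
  also have "\<dots> = 364" using Pset_card by simp
  finally have cu: "card (\<Union>i\<in>{..<91}. Pset i) = 364" .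
  have "(\<Union>i\<in>{..<91}. Pset i) \<subseteq> {..<364}" using Pset_lt by blast
  then have "(\<Union>i\<in>{..<91}. Pset i) = {..<364}"
    using cu by (intro card_subset_eq) simp_all
  then show ?thesis using c by blast
qed

definition la :: "nat \<Rightarrow> nat" where "la i = LN i ! 0"
definition lb :: "nat \<Rightarrow> nat" where "lb i = LN i ! 1"
definition lc :: "nat \<Rightarrow> nat" where "lc i = LN i ! 2"
definition ld :: "nat \<Rightarrow> nat" where "ld i = LN i ! 3"

lemma LN_form: "i < 91 \<Longrightarrow> LN i = [la i, lb i, lc i, ld i]"
proof -
  assume i: "i < 91"
  have l: "length (LN i) = 4" using part_facts[OF i] by simp
  show ?thesis
    unfolding la_def lb_def lc_def ld_def
    by (rule nth_equalityI) (use l in \<open>auto simp: less_Suc_eq numeral_eq_Suc\<close>)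
qed

lemma Pset_eq: "i < 91 \<Longrightarrow> Pset i = {la i, lb i, lc i, ld i}"
  unfolding Pset_def by (simp add: LN_form)

lemma labcd_lt: "i < 91 \<Longrightarrow> la i < 364 \<and> lb i < 364 \<and> lc i < 364 \<and> ld i < 364"
  using Pset_lt[of i] Pset_eq[of i] by simp

lemma la_ne_lb: "i < 91 \<Longrightarrow> la i \<noteq> lb i"
  using part_facts[of i] LN_form[of i] by simp

lemma pvl_valid: "valid (pvl c)"
proof -
  have v1: "valid [0,0,0,0,0,1::nat]" by (simp add: valid_def)
  show ?thesis unfolding pvl_def using valid_PW valid_addl[OF valid_PW v1] v1 by simp
qed

definition Q :: "nat \<Rightarrow> 'a::field^6 \<Rightarrow> 'a^6" where "Q j = gv ^^ (2 * j)"

definition Lin :: "nat \<Rightarrow> nat \<Rightarrow> ('a::field^6) set" where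
  "Lin j i = vec.span {Q j (pv (la i)), Q j (pv (lb i))}"

context
  assumes card3: "CARD('a::field) = 3"
begin

lemma pv_V: "c < 364 \<Longrightarrow> (pv c :: 'a^6) = V (pvl c)"
proof -
  assume c: "c < 364"
  show ?thesis
  proof (cases "c < 121")
    case True then show ?thesis unfolding pv_def pvl_def by (simp add: pw_V[OF card3])
  next
    case False
    show ?thesis
    proof (cases "c = 121")
      case True then show ?thesis unfolding pv_def pvl_def e5_def by simp
    next
      case False2: False
      have "(pw (c - 122) :: 'a^6) + e5 = V (PW (c - 122)) + V [0,0,0,0,0,1]"
        by (simp add: pw_V[OF card3] e5_def)
      also have "\<dots> = V (addl (PW (c - 122)) [0,0,0,0,0,1])"
        by (rule V_add[OF card3 valid_PW]) (simp add: valid_def)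
      finally show ?thesis unfolding pv_def pvl_def using False False2 by simp
    qed
  qed
qed

lemma pmv_V: "valid A \<Longrightarrow> valid B \<Longrightarrow> (A = B \<or> A = negl B) \<Longrightarrow> pmv (V A :: 'a^6) (V B)"
  unfolding pmv_def using V_neg[OF card3] by auto

lemma zech_facts: "i < 91 \<Longrightarrow> pmv (pv (la i) + pv (lb i) :: 'a^6) (pv (lc i)) \<and>
                            pmv (pv (la i) - pv (lb i) :: 'a^6) (pv (ld i))"
proof -
  assume i: "i < 91"
  have z: "zechq (LN i)" using zech_chk i unfolding allbelow_iff by blast
  have lt: "la i < 364" "lb i < 364" "lc i < 364" "ld i < 364" using labcd_lt[OF i] by auto
  define A where "A = pvl (la i)"
  define B where "B = pvl (lb i)"
  have vA: "valid A" and vB: "valid B" unfolding A_def B_def by (simp_all add: pvl_valid)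
  have z1: "addl A B = pvl (lc i) \<or> addl A B = negl (pvl (lc i))"
    and z2: "addl A (negl B) = pvl (ld i) \<or> addl A (negl B) = negl (pvl (ld i))"
    using z unfolding zechq_def A_def B_def la_def lb_def lc_def ld_def Let_def by auto
  have "(pv (la i) + pv (lb i) :: 'a^6) = V (addl A B)"
    using lt V_add[OF card3 vA vB] by (simp add: pv_V A_def B_def)
  moreover have "pmv (V (addl A B) :: 'a^6) (V (pvl (lc i)))"
    using pmv_V valid_addl[OF vA vB] pvl_valid z1 by blast
  moreover have "(pv (la i) - pv (lb i) :: 'a^6) = V (addl A (negl B))"
  proof -
    have "(pv (la i) - pv (lb i) :: 'a^6) = V A + - V B" using lt by (simp add: pv_V A_def B_def)
    also have "\<dots> = V A + V (negl B)" using V_neg[OF card3 vB] by simp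
    also have "\<dots> = V (addl A (negl B))" using V_add[OF card3 vA valid_negl[OF vB]] by simp
    finally show ?thesis .
  qed
  moreover have "pmv (V (addl A (negl B)) :: 'a^6) (V (pvl (ld i)))"
    using pmv_V valid_addl[OF vA valid_negl[OF vB]] pvl_valid z2 by blast
  ultimately show ?thesis using lt by (simp add: pv_V)
qed

lemma Q_add: "Q j (x + y) = Q j x + (Q j y :: 'a^6)" unfolding Q_def by (rule gvp_add)
lemma Q_neg: "Q j (- x) = - (Q j x :: 'a^6)" unfolding Q_def by (rule gvp_neg)
lemma Q_diff: "Q j (x - y) = Q j x - (Q j y :: 'a^6)" unfolding Q_def by (rule gvp_diff)
lemma Q_pmv: "pmv x y \<Longrightarrow> pmv (Q j x) (Q j y :: 'a^6)"
  unfolding pmv_def using Q_neg by auto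

lemma Q_pv: "x < 364 \<Longrightarrow> pmv (Q j (pv x) :: 'a^6) (pv (shj j x))"
proof -
  assume x: "x < 364"
  consider "x < 121" | "x = 121" | "x \<ge> 122" by linarith
  then show ?thesis
  proof cases
    case 1
    have "(Q j (pv x) :: 'a^6) = pw (2 * j + x)" unfolding Q_def pv_def using 1 by (simp add: pw_add)
    moreover have "shj j x = (2 * j + x) mod 121" unfolding shj_def using 1 by (simp add: add.commute)
    moreover have "(2 * j + x) mod 121 < 121" by simp
    ultimately show ?thesis using pw_mod121[OF card3, of "2 * j + x"] unfolding pv_def pmv_def by simp
  next
    case 2
    then show ?thesis unfolding Q_def pv_def shj_def pmv_def by (simp add: gvp_e5)
  next
    case 3
    have pa: "(gv ^^ (2 * j)) (pw (x - 122)) = (pw (2 * j + (x - 122)) :: 'a^6)"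
      by (rule pw_add[symmetric])
    have "(Q j (pv x) :: 'a^6) = (gv ^^ (2 * j)) (pw (x - 122)) + e5"
      unfolding Q_def pv_def using 3 by (simp add: gvp_add gvp_e5)
    also have "\<dots> = pw (2 * j + (x - 122)) + e5" by (simp only: pa)
    also have "(pw (2 * j + (x - 122)) :: 'a^6) = pw ((2 * j + (x - 122)) mod 242)"
      by (rule pw_mod242[OF card3])
    also have "(2 * j + (x - 122)) mod 242 = (x + 2 * j + 120) mod 242"
    proof -
      have "x + 2 * j + 120 = (2 * j + (x - 122)) + 242 * 1" using 3 by simp
      then show ?thesis by (metis mod_mult_self2)
    qed
    finally have e: "(Q j (pv x) :: 'a^6) = pw ((x + 2 * j + 120) mod 242) + e5" .
    have s: "shj j x = 122 + (x + 2 * j + 120) mod 242" unfolding shj_def using 3 by simp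
    have "(pv (shj j x) :: 'a^6) = pw ((x + 2 * j + 120) mod 242) + e5"
      unfolding s pv_def by simp
    then show ?thesis using e unfolding pmv_def by simp
  qed
qed

lemma pmv_equiv: "pmv z y \<Longrightarrow> pmv w z \<longleftrightarrow> pmv w (y :: 'a^6)"
  unfolding pmv_def by auto

lemma smult3: "(k :: 'a) *s (u :: 'a^6) = 0 \<or> k *s u = u \<or> k *s u = - u"
proof -
  have "k \<in> {0,1,-1}" using F3(1)[OF card3] by blast
  then show ?thesis by (auto simp: vec_eq_iff)
qed

lemma span2: "(w :: 'a^6) \<in> vec.span {u, v} \<longleftrightarrow>
   w = 0 \<or> pmv w u \<or> pmv w v \<or> pmv w (u + v) \<or> pmv w (u - v)"
proof -
  have "w \<in> vec.span {u, v} \<longleftrightarrow> (\<exists>k l. w = k *s u + l *s v)"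
  proof
    assume "w \<in> vec.span {u, v}"
    then obtain k where "w - k *s u \<in> vec.span {v}" unfolding vec.span_insert[of u "{v}"] by blast
    then obtain l where "w - k *s u = l *s v" unfolding vec.span_singleton by blast
    then have "w = k *s u + l *s v" by (simp add: algebra_simps)
    then show "\<exists>k l. w = k *s u + l *s v" by blast
  next
    assume "\<exists>k l. w = k *s u + l *s v"
    then obtain k l where w: "w = k *s u + l *s v" by blast
    then have "w - k *s u = l *s v" by simp
    then have "w - k *s u \<in> vec.span {v}" unfolding vec.span_singleton by (metis rangeI)
    then show "w \<in> vec.span {u, v}" unfolding vec.span_insert[of u "{v}"] by blast
  qed
  also have "\<dots> \<longleftrightarrow> w = 0 \<or> pmv w u \<or> pmv w v \<or> pmv w (u + v) \<or> pmv w (u - v)"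
  proof
    assume "\<exists>k l. w = k *s u + l *s v"
    then obtain k l where w: "w = k *s u + l *s v" by blast
    define a where "a = k *s u"
    define b where "b = l *s v"
    have ha: "a = 0 \<or> a = u \<or> a = - u" unfolding a_def by (rule smult3)
    have hb: "b = 0 \<or> b = v \<or> b = - v" unfolding b_def by (rule smult3)
    have wab: "w = a + b" unfolding a_def b_def w ..
    show "w = 0 \<or> pmv w u \<or> pmv w v \<or> pmv w (u + v) \<or> pmv w (u - v)"
      using ha hb unfolding wab pmv_def
      by (elim disjE) (simp_all add: algebra_simps)
  next
    assume "w = 0 \<or> pmv w u \<or> pmv w v \<or> pmv w (u + v) \<or> pmv w (u - v)"
    then show "\<exists>k l. w = k *s u + l *s v"
      unfolding pmv_def
    proof (elim disjE)
      assume "w = 0" then show ?thesis by (intro exI[of _ 0]) simp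
    next
      assume "w = u" then show ?thesis by (intro exI[of _ 1] exI[of _ 0]) simp
    next
      assume "w = - u" then show ?thesis by (intro exI[of _ "-1"] exI[of _ 0]) (simp add: vec_eq_iff)
    next
      assume "w = v" then show ?thesis by (intro exI[of _ 0] exI[of _ 1]) simp
    next
      assume "w = - v" then show ?thesis by (intro exI[of _ 0] exI[of _ "-1"]) (simp add: vec_eq_iff)
    next
      assume "w = u + v" then show ?thesis by (intro exI[of _ 1] exI[of _ 1]) simp
    next
      assume "w = - (u + v)" then show ?thesis by (intro exI[of _ "-1"] exI[of _ "-1"]) (simp add: vec_eq_iff)
    next
      assume "w = u - v" then show ?thesis by (intro exI[of _ 1] exI[of _ "-1"]) (simp add: vec_eq_iff)
    next
      assume "w = - (u - v)" then show ?thesis by (intro exI[of _ "-1"] exI[of _ 1]) (simp add: vec_eq_iff)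
    qed
  qed
  finally show ?thesis .
qed

lemma Lin_mem: "i < 91 \<Longrightarrow> (w :: 'a^6) \<noteq> 0 \<Longrightarrow> w \<in> Lin j i \<longleftrightarrow> pc w \<in> LS j i"
proof -
  assume i: "i < 91" and w: "w \<noteq> 0"
  have lt: "la i < 364" "lb i < 364" "lc i < 364" "ld i < 364" using labcd_lt[OF i] by auto
  define u where "u = (Q j (pv (la i)) :: 'a^6)"
  define v where "v = (Q j (pv (lb i)) :: 'a^6)"
  have pu: "pmv u (pv (shj j (la i)))" unfolding u_def using Q_pv lt by blast
  have pvv: "pmv v (pv (shj j (lb i)))" unfolding v_def using Q_pv lt by blast
  have "pmv (u + v) (Q j (pv (lc i)))"
    unfolding u_def v_def Q_add[symmetric] using Q_pmv zech_facts[OF i] by blast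
  then have puv: "pmv (u + v) (pv (shj j (lc i)))" using pmv_trans Q_pv lt by blast
  have "pmv (u - v) (Q j (pv (ld i)))"
    unfolding u_def v_def Q_diff[symmetric] using Q_pmv zech_facts[OF i] by blast
  then have pumv: "pmv (u - v) (pv (shj j (ld i)))" using pmv_trans Q_pv lt by blast
  have "w \<in> Lin j i \<longleftrightarrow> pmv w u \<or> pmv w v \<or> pmv w (u + v) \<or> pmv w (u - v)"
    unfolding Lin_def u_def[symmetric] v_def[symmetric] span2 using w by simp
  also have "\<dots> \<longleftrightarrow> (\<exists>x\<in>Pset i. pmv w (pv (shj j x)))"
    using pmv_equiv[OF pu] pmv_equiv[OF pvv] pmv_equiv[OF puv] pmv_equiv[OF pumv]
    unfolding Pset_eq[OF i] by auto
  also have "\<dots> \<longleftrightarrow> pc w \<in> LS j i"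
  proof
    assume "\<exists>x\<in>Pset i. pmv w (pv (shj j x))"
    then obtain x where x: "x \<in> Pset i" "pmv w (pv (shj j x))" by blast
    have "x < 364" using Pset_lt[OF i x(1)] .
    then have "pc w = shj j x" using pc_eq[OF card3] x(2) shj_lt by blast
    then show "pc w \<in> LS j i" unfolding LS_def using x(1) by blast
  next
    assume "pc w \<in> LS j i"
    then obtain x where x: "x \<in> Pset i" "pc w = shj j x" unfolding LS_def by blast
    then show "\<exists>x\<in>Pset i. pmv w (pv (shj j x))" using pc_props[OF card3 w] by metis
  qed
  finally show ?thesis .
qed

lemma span2_line: "a < 364 \<Longrightarrow> b < 364 \<Longrightarrow> a \<noteq> b \<Longrightarrow> pmv u (pv a) \<Longrightarrow> pmv v (pv b) \<Longrightarrow>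
   vec.span {u, v :: 'a^6} \<in> pg_lines"
proof -
  assume a: "a < 364" and b: "b < 364" and ab: "a \<noteq> b" and u: "pmv u (pv a)" and v: "pmv v (pv b)"
  have u0: "u \<noteq> 0" using u pv_ne0[OF card3, of a] unfolding pmv_def by auto
  have v0: "v \<noteq> 0" using v pv_ne0[OF card3, of b] unfolding pmv_def by auto
  have nuv: "\<not> pmv u v"
  proof
    assume "pmv u v"
    then have "pmv (pv a :: 'a^6) (pv b)" using u v pmv_sym pmv_trans by metis
    then show False using pv_uniq[OF card3 a b] ab by blast
  qed
  have uv: "u \<noteq> v" using nuv pmv_refl by metis
  have ind: "vec.independent {u, v}"
  proof -
    have "vec.independent {v}" using v0 by (simp add: vec.independent_insert)
    moreover have "u \<notin> vec.span {v}"
    proof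
      assume "u \<in> vec.span {v}"
      then obtain k where k: "u = k *s v" unfolding vec.span_singleton by blast
      then show False using smult3[of k v] u0 nuv unfolding pmv_def by auto
    qed
    ultimately show ?thesis using uv by (simp add: vec.independent_insert)
  qed
  have "vec.dim (vec.span {u, v}) = card {u, v}" using vec.dim_span_eq_card_independent[OF ind] .
  also have "\<dots> = 2" using uv by simp
  finally show ?thesis unfolding pg_lines_def by (simp add: vec.subspace_span)
qed

lemma Lin_line: "i < 91 \<Longrightarrow> (Lin j i :: ('a^6) set) \<in> pg_lines"
proof -
  assume i: "i < 91"
  have lt: "la i < 364" "lb i < 364" using labcd_lt[OF i] by auto
  have "shj j (la i) \<noteq> shj j (lb i)" using shj_inj lt la_ne_lb[OF i] by blast
  then show ?thesis unfolding Lin_def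
    using span2_line[OF shj_lt[OF lt(1)] shj_lt[OF lt(2)]] Q_pv lt by blast
qed

end

definition Sp :: "nat \<Rightarrow> ('a::field^6) set set" where "Sp j = (\<lambda>i. Lin j i) ` {..<91}"
definition Par :: "('a::field^6) set set set" where "Par = Sp ` {..<121}"
definition Dp :: "nat \<Rightarrow> bool" where
  "Dp c \<longleftrightarrow> (\<forall>c'<364. c' \<noteq> c \<longrightarrow> (\<exists>!j. j < 121 \<and> (\<exists>i<91. c \<in> LS j i \<and> c' \<in> LS j i)))"

lemma LS_lt: "i < 91 \<Longrightarrow> y \<in> LS j i \<Longrightarrow> y < 364"
  unfolding LS_def using Pset_lt shj_lt by blast

lemma LS_card: "i < 91 \<Longrightarrow> card (LS j i) = 4"
proof -
  assume i: "i < 91"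
  have "inj_on (shj j) (Pset i)"
    by (rule inj_onI) (use Pset_lt[OF i] shj_inj in blast)
  then show ?thesis unfolding LS_def using card_image Pset_card[OF i] by metis
qed

lemma LS_uniq: "i < 91 \<Longrightarrow> i' < 91 \<Longrightarrow> y \<in> LS j i \<Longrightarrow> y \<in> LS j i' \<Longrightarrow> i = i'"
proof -
  assume i: "i < 91" and i': "i' < 91" and y: "y \<in> LS j i" "y \<in> LS j i'"
  obtain x where x: "x \<in> Pset i" "y = shj j x" using y(1) unfolding LS_def by blast
  obtain x' where x': "x' \<in> Pset i'" "y = shj j x'" using y(2) unfolding LS_def by blast
  have "x = x'" using shj_inj Pset_lt[OF i x(1)] Pset_lt[OF i' x'(1)] x(2) x'(2) by metis
  then show ?thesis using Pset_disj i i' x(1) x'(1) by blast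
qed

lemma LS_shift: "i < 91 \<Longrightarrow> y \<in> LS j i \<Longrightarrow> shj m y \<in> LS ((j + m) mod 121) i"
proof -
  assume i: "i < 91" and y: "y \<in> LS j i"
  obtain x where x: "x \<in> Pset i" "y = shj j x" using y unfolding LS_def by blast
  have "shj m y = shj (m + j) x" using x shj_comp Pset_lt[OF i x(1)] by simp
  also have "\<dots> = shj ((j + m) mod 121) x" using shj_mod by (simp add: add.commute)
  finally show ?thesis unfolding LS_def using x(1) by blast
qed

lemma chkQ_iff: "chkQ r f j ys \<longleftrightarrow> (\<forall>y\<in>set ys. y = r \<or> f y = j)"
  by (induction ys) auto

lemma ex1_eq: "\<exists>!x. P x \<Longrightarrow> P a \<Longrightarrow> P b \<Longrightarrow> a = b"
  by blast

lemma chkR_nth: "chkR r f j0 ks \<Longrightarrow> k < length ks \<Longrightarrow>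
   ks ! k < 91 \<and> r \<in> LS (j0 + k) (ks ! k) \<and> (\<forall>y\<in>LS (j0 + k) (ks ! k). y = r \<or> f y = j0 + k)"
proof (induction ks arbitrary: j0 k)
  case Nil then show ?case by simp
next
  case (Cons i ks)
  show ?case
  proof (cases k)
    case 0
    have h: "i < 91" "r \<in> set (map (shj j0) (LN i))" "chkQ r f j0 (map (shj j0) (LN i))"
      using Cons.prems(1) by simp_all
    have e: "LS j0 i = set (map (shj j0) (LN i))" unfolding LS_def Pset_def by simp
    show ?thesis using 0 h unfolding e chkQ_iff LS_def Pset_def by simp
  next
    case (Suc k')
    have "chkR r f (Suc j0) ks" "k' < length ks" using Cons.prems Suc by auto
    then show ?thesis using Cons.IH[of "Suc j0" k'] Suc by simp
  qed
qed

lemma mod_arith: "(k::nat) < 121 \<Longrightarrow> (k + 120 * m) mod 121 = j0 \<Longrightarrow> k = (j0 + m) mod 121"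
proof -
  assume k: "k < 121" and e: "(k + 120 * m) mod 121 = j0"
  have "(j0 + m) mod 121 = ((k + 120 * m) mod 121 + m) mod 121" using e by simp
  also have "\<dots> = (k + 120 * m + m) mod 121" by (rule mod_add_left_eq)
  also have "k + 120 * m + m = k + 121 * m" by simp
  also have "(k + 121 * m) mod 121 = k mod 121" by simp
  also have "\<dots> = k" using k by simp
  finally show ?thesis by simp
qed

definition Xs :: "nat list \<Rightarrow> nat \<Rightarrow> nat \<Rightarrow> nat set" where
  "Xs IJ r k = LS k (IJ ! k) - {r}"

lemma rep_D:
  assumes r: "r < 364" and ch: "chkR r f 0 IJ" and len: "length IJ = 121"
  shows "Dp r"
proof -
  have F: "\<And>k. k < 121 \<Longrightarrow> IJ ! k < 91 \<and> r \<in> LS k (IJ ! k) \<and> (\<forall>y\<in>LS k (IJ ! k). y = r \<or> f y = k)"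
    using chkR_nth[OF ch] len by simp
  have Xf: "\<And>k y. k < 121 \<Longrightarrow> y \<in> Xs IJ r k \<Longrightarrow> f y = k" unfolding Xs_def using F by blast
  have Xc: "\<And>k. k < 121 \<Longrightarrow> card (Xs IJ r k) = 3"
  proof -
    fix k :: nat assume k: "k < 121"
    have "card (LS k (IJ ! k)) = 4" using LS_card F[OF k] by blast
    then show "card (Xs IJ r k) = 3" unfolding Xs_def using F[OF k] by (simp add: card_Diff_singleton)
  qed
  have "card (\<Union>k\<in>{..<121}. Xs IJ r k) = (\<Sum>k\<in>{..<121}. card (Xs IJ r k))"
  proof (rule card_UN_disjoint)
    show "finite {..<121::nat}" by simp
    show "\<forall>k\<in>{..<121}. finite (Xs IJ r k)" unfolding Xs_def LS_def Pset_def by simp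
    show "\<forall>k\<in>{..<121}. \<forall>k'\<in>{..<121}. k \<noteq> k' \<longrightarrow> Xs IJ r k \<inter> Xs IJ r k' = {}"
      using Xf by blast
  qed
  also have "\<dots> = 363" using Xc by simp
  finally have cu: "card (\<Union>k\<in>{..<121}. Xs IJ r k) = 363" .
  have sub: "(\<Union>k\<in>{..<121}. Xs IJ r k) \<subseteq> {..<364} - {r}"
    unfolding Xs_def using F LS_lt by blast
  have "card ({..<364::nat} - {r}) = 363" using r by simp
  then have eq: "(\<Union>k\<in>{..<121}. Xs IJ r k) = {..<364} - {r}"
    using cu sub by (intro card_subset_eq) simp_all
  show ?thesis unfolding Dp_def
  proof (intro allI impI)
    fix c' assume c': "c' < 364" "c' \<noteq> r"
    then have "c' \<in> (\<Union>k\<in>{..<121}. Xs IJ r k)" using eq by blast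
    then obtain k where k: "k < 121" "c' \<in> Xs IJ r k" by blast
    show "\<exists>!j. j < 121 \<and> (\<exists>i<91. r \<in> LS j i \<and> c' \<in> LS j i)"
    proof (rule ex1I[of _ k])
      show "k < 121 \<and> (\<exists>i<91. r \<in> LS k i \<and> c' \<in> LS k i)"
        using k F[OF k(1)] unfolding Xs_def by blast
    next
      fix j assume j: "j < 121 \<and> (\<exists>i<91. r \<in> LS j i \<and> c' \<in> LS j i)"
      then obtain i where i: "i < 91" "r \<in> LS j i" "c' \<in> LS j i" by blast
      have "i = IJ ! j" using LS_uniq[OF i(1) _ i(2)] F j by blast
      then have "c' \<in> Xs IJ r j" unfolding Xs_def using i c' by blast
      then have "f c' = j" using Xf j by blast
      moreover have "f c' = k" using Xf k by blast
      ultimately show "j = k" by simp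
    qed
  qed
qed

lemma D_shift:
  assumes D: "Dp c" and c: "c < 364"
  shows "Dp (shj m c)"
  unfolding Dp_def
proof (intro allI impI)
  fix c'' assume c'': "c'' < 364" "c'' \<noteq> shj m c"
  define n where "n = 120 * m"
  define c' where "c' = shj n c''"
  have c'lt: "c' < 364" unfolding c'_def using shj_lt c'' by blast
  have c''e: "shj m c' = c''" unfolding c'_def n_def using shj_inv2 c'' by blast
  have ce: "shj n (shj m c) = c" unfolding n_def using shj_inv c by blast
  have "c' \<noteq> c" using c''e c'' by blast
  then have ex: "\<exists>!j. j < 121 \<and> (\<exists>i<91. c \<in> LS j i \<and> c' \<in> LS j i)" using D c'lt unfolding Dp_def by blast
  then obtain j0 where j0': "j0 < 121 \<and> (\<exists>i<91. c \<in> LS j0 i \<and> c' \<in> LS j0 i)" by (rule ex1E)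
  then obtain i0 where j0: "j0 < 121" "i0 < 91" "c \<in> LS j0 i0" "c' \<in> LS j0 i0" by blast
  have u: "\<And>j. j < 121 \<and> (\<exists>i<91. c \<in> LS j i \<and> c' \<in> LS j i) \<Longrightarrow> j = j0"
    using ex1_eq[OF ex _ j0'] by blast
  show "\<exists>!j. j < 121 \<and> (\<exists>i<91. shj m c \<in> LS j i \<and> c'' \<in> LS j i)"
  proof (rule ex1I[of _ "(j0 + m) mod 121"])
    show "(j0 + m) mod 121 < 121 \<and> (\<exists>i<91. shj m c \<in> LS ((j0 + m) mod 121) i \<and> c'' \<in> LS ((j0 + m) mod 121) i)"
      using LS_shift[OF j0(2) j0(3), of m] LS_shift[OF j0(2) j0(4), of m] c''e j0(2) by auto
  next
    fix k assume k: "k < 121 \<and> (\<exists>i<91. shj m c \<in> LS k i \<and> c'' \<in> LS k i)"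
    then obtain i where i: "i < 91" "shj m c \<in> LS k i" "c'' \<in> LS k i" by blast
    have "c \<in> LS ((k + n) mod 121) i" using LS_shift[OF i(1) i(2), of n] ce by simp
    moreover have "c' \<in> LS ((k + n) mod 121) i" using LS_shift[OF i(1) i(3), of n] c'_def by simp
    ultimately have "(k + n) mod 121 < 121 \<and> (\<exists>i<91. c \<in> LS ((k + n) mod 121) i \<and> c' \<in> LS ((k + n) mod 121) i)"
      using i(1) by auto
    then have "(k + n) mod 121 = j0" by (rule u)
    then show "k = (j0 + m) mod 121" using mod_arith k n_def by blast
  qed
qed

lemma D_all: "c < 364 \<Longrightarrow> Dp c"
proof -
  assume c: "c < 364"
  obtain m r where r: "r \<in> {0,121,122,123}" "c = shj m r" using orbit[OF c] by blast
  have "Dp r"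
    using r(1) rep_D[OF _ rep0_chk] rep_D[OF _ rep121_chk] rep_D[OF _ rep122_chk] rep_D[OF _ rep123_chk] IJ_len
    by auto
  then show ?thesis using D_shift r by auto
qed

context
  assumes card3: "CARD('a::field) = 3"
begin

lemma point_form: "(P :: ('a^6) set) \<in> pg_points \<Longrightarrow> \<exists>w. w \<noteq> 0 \<and> P = vec.span {w}"
proof -
  assume "P \<in> pg_points"
  then have sP: "vec.subspace P" and dP: "vec.dim P = 1" unfolding pg_points_def by auto
  obtain B where B: "B \<subseteq> P" "vec.independent B" "P \<subseteq> vec.span B" "card B = vec.dim P"
    using vec.basis_exists by blast
  then obtain w where w: "B = {w}" using dP card_1_singletonE by metis
  have "w \<noteq> 0" using B(2) w vec.dependent_zero by blast
  moreover have "vec.span B = P" using vec.span_subspace[OF B(1) B(3) sP] .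
  ultimately show ?thesis using w by blast
qed

lemma line_form: "(L :: ('a^6) set) \<in> pg_lines \<Longrightarrow> \<exists>u v. u \<noteq> 0 \<and> v \<notin> vec.span {u} \<and> L = vec.span {u, v}"
proof -
  assume "L \<in> pg_lines"
  then have sL: "vec.subspace L" and dL: "vec.dim L = 2" unfolding pg_lines_def by auto
  obtain B where B: "B \<subseteq> L" "vec.independent B" "L \<subseteq> vec.span B" "card B = vec.dim L"
    using vec.basis_exists by blast
  then obtain x y where xy: "B = {x, y}" "x \<noteq> y" using dL card_2_iff by metis
  have ind: "vec.independent {y}" "x \<notin> vec.span {y}"
    using B(2) xy by (simp_all add: vec.independent_insert)
  have "y \<noteq> 0" using ind(1) vec.dependent_zero by blast
  moreover have "L = vec.span {y, x}" using vec.span_subspace[OF B(1) B(3) sL] xy by (simp add: insert_commute)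
  ultimately show ?thesis using ind(2) by blast
qed

lemma sub_iff: "vec.subspace L \<Longrightarrow> vec.span {w} \<subseteq> L \<longleftrightarrow> (w :: 'a^6) \<in> L"
  using vec.span_minimal[of "{w}" L] vec.span_base[of w "{w}"] by auto

lemma Lin_sub: "vec.subspace (Lin j i :: ('a^6) set)"
  unfolding Lin_def by (rule vec.subspace_span)

lemma Sp_spread: "is_spread (Sp j :: ('a^6) set set)"
  unfolding is_spread_def
proof (intro conjI ballI)
  show "(Sp j :: ('a^6) set set) \<subseteq> pg_lines"
  proof
    fix L :: "('a^6) set" assume "L \<in> Sp j"
    then obtain i where "i < 91" "L = Lin j i" unfolding Sp_def by blast
    then show "L \<in> pg_lines" using Lin_line[OF card3] by simp
  qed
next
  fix P :: "('a^6) set" assume "P \<in> pg_points"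
  then obtain w where w: "w \<noteq> 0" "P = vec.span {w}" using point_form by blast
  have pw: "pc w < 364" using pc_props[OF card3 w(1)] by blast
  define c0 where "c0 = shj (120 * j) (pc w)"
  have c0: "c0 < 364" "shj j c0 = pc w" unfolding c0_def using shj_lt shj_inv2 pw by blast+
  obtain i where i: "i < 91" "c0 \<in> Pset i" using Pset_cover[OF c0(1)] by blast
  have "pc w \<in> LS j i" unfolding LS_def using i(2) c0(2) by (intro image_eqI[where x=c0]) simp_all
  then have wi: "w \<in> Lin j i" using Lin_mem[OF card3 i(1) w(1)] by blast
  show "\<exists>!L. L \<in> Sp j \<and> P \<subseteq> L"
  proof (rule ex1I[of _ "Lin j i"])
    show "Lin j i \<in> Sp j \<and> P \<subseteq> Lin j i" unfolding Sp_def using i wi w sub_iff[OF Lin_sub] by blast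
  next
    fix L assume L: "L \<in> Sp j \<and> P \<subseteq> L"
    then obtain i' where i': "i' < 91" "L = Lin j i'" unfolding Sp_def by blast
    have "w \<in> Lin j i'" using L i' w sub_iff[OF Lin_sub] by blast
    then have "pc w \<in> LS j i'" using Lin_mem[OF card3 i'(1) w(1)] by blast
    then have "i' = i" using LS_uniq[OF i'(1) i(1)] \<open>pc w \<in> LS j i\<close> by blast
    then show "L = Lin j i" using i' by simp
  qed
qed

lemma Lin_gens: "i < 91 \<Longrightarrow> \<exists>u v. (u :: 'a^6) \<in> Lin j i \<and> (v :: 'a^6) \<in> Lin j i \<and> u \<noteq> 0 \<and> v \<noteq> 0 \<and>
     pc u \<noteq> pc v \<and> pc u \<in> LS j i \<and> pc v \<in> LS j i"
proof -
  assume i: "i < 91"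
  have lt: "la i < 364" "lb i < 364" using labcd_lt[OF i] by auto
  define u where "u = (Q j (pv (la i)) :: 'a^6)"
  define v where "v = (Q j (pv (lb i)) :: 'a^6)"
  have pu: "pc u = shj j (la i)" unfolding u_def by (rule pc_eq[OF card3 shj_lt[OF lt(1)] Q_pv[OF card3 lt(1)]])
  have pvv: "pc v = shj j (lb i)" unfolding v_def by (rule pc_eq[OF card3 shj_lt[OF lt(2)] Q_pv[OF card3 lt(2)]])
  have "pmv u (pv (shj j (la i)))" unfolding u_def by (rule Q_pv[OF card3 lt(1)])
  then have u0: "u \<noteq> 0" using pv_ne0[OF card3, of "shj j (la i)"] unfolding pmv_def by auto
  have "pmv v (pv (shj j (lb i)))" unfolding v_def by (rule Q_pv[OF card3 lt(2)])
  then have v0: "v \<noteq> 0" using pv_ne0[OF card3, of "shj j (lb i)"] unfolding pmv_def by auto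
  have "u \<in> Lin j i" "v \<in> Lin j i" unfolding Lin_def u_def v_def by (simp_all add: vec.span_base)
  moreover have "pc u \<noteq> pc v"
  proof
    assume "pc u = pc v"
    then have "shj j (la i) = shj j (lb i)" using pu pvv by simp
    then have "la i = lb i" using shj_inj lt by blast
    then show False using la_ne_lb[OF i] by simp
  qed
  moreover have "pc u \<in> LS j i" "pc v \<in> LS j i"
    using Lin_mem[OF card3 i] u0 v0 \<open>u \<in> Lin j i\<close> \<open>v \<in> Lin j i\<close> by blast+
  ultimately show ?thesis using u0 v0 by blast
qed

lemma line_unique: "j < 121 \<Longrightarrow> k < 121 \<Longrightarrow> i < 91 \<Longrightarrow> i' < 91 \<Longrightarrow>
   (Lin j i :: ('a^6) set) = Lin k i' \<Longrightarrow> j = k"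
proof -
  assume j: "j < 121" and k: "k < 121" and i: "i < 91" and i': "i' < 91" and e: "(Lin j i :: ('a^6) set) = Lin k i'"
  obtain u v where uv: "(u :: 'a^6) \<in> Lin j i" "(v :: 'a^6) \<in> Lin j i" "u \<noteq> 0" "v \<noteq> 0" "pc u \<noteq> pc v"
    "pc u \<in> LS j i" "pc v \<in> LS j i" using Lin_gens[OF i] by blast
  have "pc u \<in> LS k i'" "pc v \<in> LS k i'" using Lin_mem[OF card3 i'] uv e by blast+
  moreover have "pc v < 364" using pc_props[OF card3 uv(4)] by blast
  moreover have "Dp (pc u)" using D_all pc_props[OF card3 uv(3)] by blast
  ultimately have ex: "\<exists>!j. j < 121 \<and> (\<exists>i<91. pc u \<in> LS j i \<and> pc v \<in> LS j i)"
    using uv(5) unfolding Dp_def by simp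
  have a: "j < 121 \<and> (\<exists>i<91. pc u \<in> LS j i \<and> pc v \<in> LS j i)" using j i uv(6,7) by blast
  have b: "k < 121 \<and> (\<exists>i<91. pc u \<in> LS k i \<and> pc v \<in> LS k i)"
    using k i' \<open>pc u \<in> LS k i'\<close> \<open>pc v \<in> LS k i'\<close> by blast
  show "j = k" by (rule ex1_eq[OF ex a b])
qed

lemma line_exists: "(L :: ('a^6) set) \<in> pg_lines \<Longrightarrow> \<exists>j<121. \<exists>i<91. L = Lin j i"
proof -
  assume L: "L \<in> pg_lines"
  obtain u v where uv: "u \<noteq> 0" "v \<notin> vec.span {u}" "L = vec.span {u, v}" using line_form[OF L] by blast
  have v0: "v \<noteq> 0" using uv(2) vec.span_zero by auto
  have pu: "pc u < 364" "pmv u (pv (pc u))" using pc_props[OF card3 uv(1)] by auto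
  have pv': "pc v < 364" "pmv v (pv (pc v))" using pc_props[OF card3 v0] by auto
  have ne: "pc v \<noteq> pc u"
  proof
    assume "pc v = pc u"
    then have "pmv v (pv (pc u))" using pv'(2) by simp
    then have "pmv v u" using pmv_trans pmv_sym[OF pu(2)] by blast
    then have "v = 1 *s u \<or> v = (-1) *s u" unfolding pmv_def by (auto simp: vec_eq_iff)
    then have "v \<in> vec.span {u}" unfolding vec.span_singleton by blast
    then show False using uv(2) by blast
  qed
  have "Dp (pc u)" using D_all pu by blast
  then obtain j i where ji: "j < 121" "i < 91" "pc u \<in> LS j i" "pc v \<in> LS j i"
    using ne pv' unfolding Dp_def by blast
  have "u \<in> Lin j i" "v \<in> Lin j i" using Lin_mem[OF card3 ji(2)] uv(1) v0 ji by blast+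
  then have "L \<subseteq> Lin j i" using uv(3) vec.span_minimal[OF _ Lin_sub] by blast
  moreover have "vec.dim (Lin j i :: ('a^6) set) \<le> vec.dim L"
  proof -
    have "(Lin j i :: ('a^6) set) \<in> pg_lines" by (rule Lin_line[OF card3 ji(2)])
    then have "vec.dim (Lin j i :: ('a^6) set) = 2" unfolding pg_lines_def by simp
    moreover have "vec.dim L = 2" using L unfolding pg_lines_def by simp
    ultimately show ?thesis by simp
  qed
  moreover have "vec.subspace L" using L unfolding pg_lines_def by simp
  ultimately have "L = Lin j i" using vec.subspace_dim_equal[OF _ Lin_sub] by blast
  then show ?thesis using ji by blast
qed

theorem main:
  "\<exists>\<P> :: ('a ^ 6) set set set. is_parallelism \<P> \<and> card \<P> = 121 \<and> (\<forall>S\<in>\<P>. card S = 91)"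
proof (intro exI[of _ Par] conjI)
  show "is_parallelism (Par :: ('a ^ 6) set set set)"
    unfolding is_parallelism_def
  proof (intro conjI ballI)
    fix S :: "('a^6) set set" assume "S \<in> Par"
    then obtain j where "S = Sp j" unfolding Par_def by (rule imageE)
    then show "is_spread S" using Sp_spread by simp
  next
    fix L :: "('a^6) set" assume L: "L \<in> pg_lines"
    obtain j i where ji: "j < 121" "i < 91" "L = Lin j i" using line_exists[OF L] by blast
    show "\<exists>!S. S \<in> Par \<and> L \<in> S"
    proof (rule ex1I[of _ "Sp j"])
      have "(Sp j :: ('a^6) set set) \<in> Par" unfolding Par_def using ji(1) by simp
      moreover have "L \<in> Sp j" unfolding Sp_def using ji(2,3) by simp
      ultimately show "(Sp j :: (('a^6) set set)) \<in> Par \<and> L \<in> Sp j" by simp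
    next
      fix S :: "('a^6) set set" assume S: "S \<in> Par \<and> L \<in> S"
      then obtain k where k: "k < 121" "S = Sp k" unfolding Par_def by auto
      then obtain i' where i': "i' < 91" "L = Lin k i'" using S unfolding Sp_def by auto
      have e: "(Lin j i :: ('a^6) set) = Lin k i'" using ji(3) i'(2) by simp
      have "j = k" by (rule line_unique[OF ji(1) k(1) ji(2) i'(1) e])
      then show "S = Sp j" using k by simp
    qed
  qed
next
  have "inj_on (Sp :: nat \<Rightarrow> ('a^6) set set) {..<121}"
  proof (rule inj_onI)
    fix j k :: nat assume j: "j \<in> {..<121}" and k: "k \<in> {..<121}" and e: "(Sp j :: ('a^6) set set) = Sp k"
    have "(Lin j 0 :: ('a^6) set) \<in> Sp j" unfolding Sp_def by simp
    then have "(Lin j 0 :: ('a^6) set) \<in> Sp k" using e by simp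
    then obtain i' where i': "i' < 91" "(Lin j 0 :: ('a^6) set) = Lin k i'" unfolding Sp_def by auto
    show "j = k" using line_unique[OF _ _ _ i'(1) i'(2)] j k by simp
  qed
  then show "card (Par :: ('a ^ 6) set set set) = 121" unfolding Par_def by (simp add: card_image)
next
  show "\<forall>S\<in>(Par :: ('a ^ 6) set set set). card S = 91"
  proof
    fix S :: "('a^6) set set" assume "S \<in> Par"
    then obtain j where S: "S = Sp j" unfolding Par_def by (rule imageE)
    have "inj_on (Lin j :: nat \<Rightarrow> ('a^6) set) {..<91}"
    proof (rule inj_onI)
      fix i i' :: nat assume i: "i \<in> {..<91}" and i': "i' \<in> {..<91}" and e: "(Lin j i :: ('a^6) set) = Lin j i'"
      have ii: "i < 91" "i' < 91" using i i' by auto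
      obtain u v where u: "(u :: 'a^6) \<in> Lin j i" "(v :: 'a^6) \<in> Lin j i" "u \<noteq> 0" "v \<noteq> 0" "pc u \<noteq> pc v"
        "pc u \<in> LS j i" "pc v \<in> LS j i" using Lin_gens[OF ii(1)] by blast
      have "u \<in> Lin j i'" using u(1) e by simp
      then have "pc u \<in> LS j i'" using Lin_mem[OF card3 ii(2) u(3)] by simp
      then show "i = i'" using LS_uniq[OF ii(1) ii(2) u(6)] by simp
    qed
    then show "card S = 91" unfolding S Sp_def by (simp add: card_image)
  qed
qed

end

theorem mainTheorem1:
  assumes "CARD('a::field) = 3"
  shows "\<exists>\<P> :: ('a ^ 6) set set set. is_parallelism \<P> \<and> card \<P> = 121 \<and>
           (\<forall>S\<in>\<P>. card S = 91)"
  using main[OF assms] .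

end
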